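(* Let $r_1,r_2,r_3,L,M>0$ with $r_2>\max(r_1,r_3)$, and let $\lambda_1,F,\varphi_1$ be as in the context. Let $c_A>2\sqrt{-\lambda_1}$, let $B,\tau\ge0$ and $T>0$, and let $A\in\mathcal C(\mathbb{R},[0,+\infty))$ with $A(t)=c_A(t-\tau)+B$ for $t\in[\tau,\tau+T)$. Let $r(t,x)=r_1$ if $x<A(t)$, $r_2$ if $A(t)\le x<A(t)+L$, $r_3$ if $x\ge A(t)+L$, and let $f$ be globally bounded in $(t,x)$, $\mathcal C^2$ in $u$, with $f(t,x,0)=0$, $\partial_uf(t,x,0)=r(t,x)$, $r(t,x)u\ge f(t,x,u)\ge r(t,x)u-Mu^2$ for $u\ge0$, $f(t,x,u)<0$ for $u>1$. Let $c=F(c_A)$ if $c_A<2\sqrt{r_1}+2\sqrt{-\lambda_1-r_1}$ and $c=2\sqrt{r_1}$ otherwise, $\lambda(c)=\frac12(c-\sqrt{c^2-4r_1})$, and $$\overline{u}(t,x)=\begin{cases}2 & x\le ct-\frac{\ln2}{\lambda(c)},\\ e^{-\lambda(c)(x-ct)} & ct-\frac{\ln2}{\lambda(c)}<x<c_At,\\ e^{-\lambda(c)(c_A-c)t}e^{-\frac{c_A(x-c_At)}{2}}\varphi_1\big(\frac{x-c_At}{L}\big) & x\ge c_At.\end{cases}$$ Then for every constant $C\ge1$, $(t,x)\mapsto C\overline{u}(t-\tau,x-B)$ is a (generalized) super-solution of $\partial_tu=\partial_{xx}u+f(t,x,u)$ for $t\in[\tau,\tau+T)$, $x\in\mathbb{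R}$.
   Context: $\underline{L}=0$ if $r_1=r_3$, otherwise $\underline{L}=\frac{1}{\sqrt{r_2-\max(r_1,r_3)}}\operatorname{arccot}\big(\sqrt{\frac{r_2-\max(r_1,r_3)}{|r_1-r_3|}}\big)$. $\lambda_1=-\max(r_1,r_3)$ if $L\le\underline{L}$; if $L>\underline{L}$, $\lambda_1$ is the unique solution in $(-r_2,\min(-\max(r_1,r_3),\pi^2/L^2-r_2))$ of $\cot(L\sqrt{r_2+\lambda_1})=\frac{r_2+\lambda_1-\sqrt{(r_1+\lambda_1)(r_3+\lambda_1)}}{\sqrt{r_2+\lambda_1}(\sqrt{-r_1-\lambda_1}+\sqrt{-r_3-\lambda_1})}$. $F(c)=\frac{c-2\sqrt{-\lambda_1-r_1}}{2}+\frac{2r_1}{c-2\sqrt{-\lambda_1-r_1}}$. $\varphi_1$ (normalized by $\varphi_1(0)=1$): (1) if $L>\underline{L}$, with $C_3\in(0,\pi/2)$, $\cot C_3=\sqrt{(-r_1-\lambda_1)/(r_2+\lambda_1)}$: $\varphi_1(y)=e^{L\sqrt{-r_1-\lambda_1}y}$ ($y\le0$), $\sin(L\sqrt{r_2+\lambda_1}y+C_3)/\sin C_3$ ($0<y<1$), $\frac{\sin(L\sqrt{r_2+\lambda_1}+C_3)}{\sin C_3}e^{-L\sqrt{-r_3-\lambda_1}(y-1)}$ ($y\ge1$); (2) if $r_1<r_3$, $L\le\underline{L}$, with $C_3\in(0,\pi/2)$, $\cot C_3=\sqrt{(r_3-r_1)/(r_2-r_3)}$: $\varphi_1(y)=e^{L\sqrt{r_3-r_1}y}$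 ($y\le0$), $\sin(L\sqrt{r_2-r_3}y+C_3)/\sin C_3$ ($0<y<1$), $\frac{\sin(L\sqrt{r_2-r_3}+C_3)+\sqrt{r_2-r_3}\cos(L\sqrt{r_2-r_3}+C_3)L(y-1)}{\sin C_3}$ ($y\ge1$); (3) if $r_1>r_3$, $L\le\underline{L}$: $\varphi_1(y)=\psi(1-y)/\psi(1)$ with $\psi$ the function of case (2) with $r_1,r_3$ interchanged. A (generalized) super-solution is a continuous, piecewise smooth function satisfying $\partial_t\overline u\ge\partial_{xx}\overline u+f(t,x,\overline u)$ in each smoothness region and $\partial_x\overline u(t,x^-)\ge\partial_x\overline u(t,x^+)$ across interfaces. *)

theory Defs
  imports "HOL-Analysis.Analysis"
begin

definition arccot :: "real \<Rightarrow> real" where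
  "arccot x = pi / 2 - arctan x"

definition Lbar :: "real \<Rightarrow> real \<Rightarrow> real \<Rightarrow> real" where
  "Lbar r1 r2 r3 = (if r1 = r3 then 0 else
     1 / sqrt (r2 - max r1 r3) * arccot (sqrt ((r2 - max r1 r3) / \<bar>r1 - r3\<bar>)))"

definition lambda1 :: "real \<Rightarrow> real \<Rightarrow> real \<Rightarrow> real \<Rightarrow> real" where
  "lambda1 r1 r2 r3 L = (if L \<le> Lbar r1 r2 r3 then - max r1 r3 else
     (THE l. - r2 < l \<and> l < min (- max r1 r3) (pi ^ 2 / L ^ 2 - r2) \<and>
        cot (L * sqrt (r2 + l)) =
          (r2 + l - sqrt ((r1 + l) * (r3 + l))) /
          (sqrt (r2 + l) * (sqrt (- r1 - l) + sqrt (- r3 - l)))))"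

definition Ffun :: "real \<Rightarrow> real \<Rightarrow> real \<Rightarrow> real \<Rightarrow> real \<Rightarrow> real" where
  "Ffun r1 r2 r3 L c =
     (c - 2 * sqrt (- lambda1 r1 r2 r3 L - r1)) / 2
     + 2 * r1 / (c - 2 * sqrt (- lambda1 r1 r2 r3 L - r1))"

definition C3_of :: "real \<Rightarrow> real" where
  "C3_of s = (THE C. 0 < C \<and> C < pi / 2 \<and> cot C = s)"

definition phi_case1 :: "real \<Rightarrow> real \<Rightarrow> real \<Rightarrow> real \<Rightarrow> real \<Rightarrow> real" where
  "phi_case1 r1 r2 r3 L y =
     (let l = lambda1 r1 r2 r3 L;
          C3 = C3_of (sqrt ((- r1 - l) / (r2 + l)))
      in if y \<le> 0 then exp (L * sqrt (- r1 - l) * y)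
         else if y < 1 then sin (L * sqrt (r2 + l) * y + C3) / sin C3
         else sin (L * sqrt (r2 + l) + C3) / sin C3 * exp (- L * sqrt (- r3 - l) * (y - 1)))"

definition phi_case2 :: "real \<Rightarrow> real \<Rightarrow> real \<Rightarrow> real \<Rightarrow> real \<Rightarrow> real" where
  "phi_case2 r1 r2 r3 L y =
     (let C3 = C3_of (sqrt ((r3 - r1) / (r2 - r3)))
      in if y \<le> 0 then exp (L * sqrt (r3 - r1) * y)
         else if y < 1 then sin (L * sqrt (r2 - r3) * y + C3) / sin C3
         else (sin (L * sqrt (r2 - r3) + C3)
               + sqrt (r2 - r3) * cos (L * sqrt (r2 - r3) + C3) * L * (y - 1)) / sin C3)"

text \<open>phi_1, normalized by phi_1(0) = 1. (When r1 = r3, Lbar = 0 < L, so case (1) applies.)\<close>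
definition phi1 :: "real \<Rightarrow> real \<Rightarrow> real \<Rightarrow> real \<Rightarrow> real \<Rightarrow> real" where
  "phi1 r1 r2 r3 L y =
     (if Lbar r1 r2 r3 < L then phi_case1 r1 r2 r3 L y
      else if r1 < r3 then phi_case2 r1 r2 r3 L y
      else phi_case2 r3 r2 r1 L (1 - y) / phi_case2 r3 r2 r1 L 1)"

definition speed_c :: "real \<Rightarrow> real \<Rightarrow> real \<Rightarrow> real \<Rightarrow> real \<Rightarrow> real" where
  "speed_c r1 r2 r3 L cA =
     (if cA < 2 * sqrt r1 + 2 * sqrt (- lambda1 r1 r2 r3 L - r1)
      then Ffun r1 r2 r3 L cA else 2 * sqrt r1)"

definition lam :: "real \<Rightarrow> real \<Rightarrow> real" where
  "lam r1 c = (c - sqrt (c ^ 2 - 4 * r1)) / 2"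

definition ubar :: "real \<Rightarrow> real \<Rightarrow> real \<Rightarrow> real \<Rightarrow> real \<Rightarrow> real \<Rightarrow> real \<Rightarrow> real" where
  "ubar r1 r2 r3 L cA t x =
     (let c = speed_c r1 r2 r3 L cA; lc = lam r1 c
      in if x \<le> c * t - ln 2 / lc then 2
         else if x < cA * t then exp (- lc * (x - c * t))
         else exp (- lc * (cA - c) * t) * exp (- (cA * (x - cA * t)) / 2)
              * phi1 r1 r2 r3 L ((x - cA * t) / L))"

definition gen_supersolution ::
  "(real \<Rightarrow> real \<Rightarrow> real \<Rightarrow> real) \<Rightarrow> real \<Rightarrow> real \<Rightarrow> (real \<Rightarrow> real \<Rightarrow> real) \<Rightarrow> bool" where
  "gen_supersolution f tau T U \<longleftrightarrow>
     continuous_on ({tau..<tau + T} \<times> UNIV) (\<lambda>(t, x). U t x) \<and>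
     (\<exists>S :: (real \<Rightarrow> real) set. finite S \<and>
        (\<forall>\<gamma>\<in>S. continuous_on {tau..<tau + T} \<gamma>) \<and>
        (\<forall>t\<in>{tau..<tau + T}. \<forall>x. (\<forall>\<gamma>\<in>S. x \<noteq> \<gamma> t) \<longrightarrow>
           (\<exists>e>0. \<exists>Ux. \<exists>Ut Uxx.
              (\<forall>y\<in>ball x e. ((\<lambda>z. U t z) has_real_derivative Ux y) (at y)) \<and>
              (Ux has_real_derivative Uxx) (at x) \<and>
              ((\<lambda>s. U s x) has_real_derivative Ut) (at t within {tau..<tau + T}) \<and>
              Ut \<ge> Uxx + f t x (U t x))) \<and>
        (\<forall>t\<in>{tau..<tau + T}. \<forall>\<gamma>\<in>S.
           (\<exists>dl dr. ((\<lambda>z. U t z) has_real_derivative dl) (at_left (\<gamma> t)) \<and>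
                    ((\<lambda>z. U t z) has_real_derivative dr) (at_right (\<gamma> t)) \<and>
                    dl \<ge> dr)))"

end

theory Submission
  imports Defs
begin


lemma gchain:
  assumes "\<forall>w. (g has_real_derivative g' w) (at w)"
    and "(h has_real_derivative h') (at x)" and "D = g' (h x) * h'"
  shows "((\<lambda>x. g (h x)) has_real_derivative D) (at x)"
  using DERIV_chain2[of g "g' (h x)" h x h'] assms by auto

lemma H_dx:
  assumes g: "\<forall>w. (g has_real_derivative g' w) (at w)"
  shows "((\<lambda>z. K * exp (- (cA * (z - B - m)) / 2) * g (z - B - m)) has_real_derivative
     K * exp (- (cA * (x - B - m)) / 2) * (g' (x - B - m) - cA / 2 * g (x - B - m))) (at x)"
  apply (rule derivative_eq_intros gchain[OF g] refl | simp)+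
  apply (simp add: algebra_simps)
  done

lemma H_dxx:
  assumes g: "\<forall>w. (g has_real_derivative g' w) (at w)"
    and g': "\<forall>w. (g' has_real_derivative g'' w) (at w)"
  shows "((\<lambda>z. K * exp (- (cA * (z - B - m)) / 2) * (g' (z - B - m) - cA / 2 * g (z - B - m)))
     has_real_derivative
     K * exp (- (cA * (x - B - m)) / 2) * (g'' (x - B - m) - cA * g' (x - B - m)
        + cA ^ 2 / 4 * g (x - B - m))) (at x)"
  apply (rule derivative_eq_intros gchain[OF g] gchain[OF g'] refl | simp)+
  apply (simp add: field_simps power2_eq_square)
  done

lemma H_dt:
  assumes g: "\<forall>w. (g has_real_derivative g' w) (at w)"
  shows "((\<lambda>s. C * exp (- lc * (cA - c) * (s - tau)) * exp (- (cA * (x - B - cA * (s - tau))) / 2)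
        * g (x - B - cA * (s - tau))) has_real_derivative
     C * exp (- lc * (cA - c) * (t - tau)) * exp (- (cA * (x - B - cA * (t - tau))) / 2)
       * ((- lc * (cA - c) + cA ^ 2 / 2) * g (x - B - cA * (t - tau)) - cA * g' (x - B - cA * (t - tau)))) (at t)"
  apply (rule derivative_eq_intros gchain[OF g] refl | simp)+
  apply (simp add: field_simps power2_eq_square)
  done


lemma offcurve:
  fixes U G :: "real \<Rightarrow> real \<Rightarrow> real"
  assumes W: "open W" "(t, x) \<in> W" "\<forall>p\<in>W. U (fst p) (snd p) = G (fst p) (snd p)"
    and dx: "\<forall>y. ((\<lambda>z. G t z) has_real_derivative Gx y) (at y)"
    and dxx: "(Gx has_real_derivative Gxx) (at x)"
    and dt: "((\<lambda>s. G s x) has_real_derivative Gt) (at t)"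
    and ineq: "Gt \<ge> Gxx + f t x (G t x)"
  shows "\<exists>e>0. \<exists>Ux. \<exists>Ut Uxx.
              (\<forall>y\<in>ball x e. ((\<lambda>z. U t z) has_real_derivative Ux y) (at y)) \<and>
              (Ux has_real_derivative Uxx) (at x) \<and>
              ((\<lambda>s. U s x) has_real_derivative Ut) (at t within {tau..<tau + T}) \<and>
              Ut \<ge> Uxx + f t x (U t x)"
proof -
  obtain e where e: "e > 0" "ball (t, x) e \<subseteq> W" using W open_contains_ball by blast
  have Ox: "open {z. (t, z) \<in> W}"
    using continuous_open_vimage[OF W(1), of "\<lambda>z. (t, z)"] by (simp add: vimage_def continuous_intros)
  have Ot: "open {s. (s, x) \<in> W}"
    using continuous_open_vimage[OF W(1), of "\<lambda>s. (s, x)"] by (simp add: vimage_def continuous_intros)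
  have "\<forall>y\<in>ball x e. ((\<lambda>z. U t z) has_real_derivative Gx y) (at y)"
  proof
    fix y assume y: "y \<in> ball x e"
    then have "(t, y) \<in> ball (t, x) e" by (simp add: dist_Pair_Pair dist_commute)
    then have "(t, y) \<in> W" using e by auto
    show "((\<lambda>z. U t z) has_real_derivative Gx y) (at y)"
      apply (rule has_field_derivative_transform_within_open[OF dx[rule_format] Ox])
      using \<open>(t, y) \<in> W\<close> W(3) by auto
  qed
  moreover have "((\<lambda>s. U s x) has_real_derivative Gt) (at t)"
    apply (rule has_field_derivative_transform_within_open[OF dt Ot])
    using W(2,3) by auto
  moreover have "U t x = G t x" using W(2,3) by auto
  ultimately show ?thesis using e(1) dxx ineq
    by (metis has_field_derivative_at_within)
qed

lemma iface_left:
  assumes "(G has_real_derivative D) (at a)" "0 < d" "\<forall>z. a - d < z \<and> z \<le> a \<longrightarrow> F z = G z"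
  shows "(F has_real_derivative D) (at_left a)"
proof -
  have "(G has_real_derivative D) (at a within {..a})" using assms(1) has_field_derivative_at_within by blast
  then have "(F has_real_derivative D) (at a within {..a})"
    apply (rule has_field_derivative_transform_within[OF _ assms(2)])
    using assms(3) by (auto simp: dist_real_def)
  then show ?thesis by (rule has_field_derivative_subset) auto
qed

lemma iface_right:
  assumes "(G has_real_derivative D) (at a)" "0 < d" "\<forall>z. a \<le> z \<and> z < a + d \<longrightarrow> F z = G z"
  shows "(F has_real_derivative D) (at_right a)"
proof -
  have "(G has_real_derivative D) (at a within {a..})" using assms(1) has_field_derivative_at_within by blast
  then have "(F has_real_derivative D) (at a within {a..})"
    apply (rule has_field_derivative_transform_within[OF _ assms(2)])
    using assms(3) by (auto simp: dist_real_def)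
  then show ?thesis by (rule has_field_derivative_subset) auto
qed


definition Vf :: "real \<Rightarrow> real \<Rightarrow> real \<Rightarrow> (real \<Rightarrow> real) \<Rightarrow> (real \<Rightarrow> real) \<Rightarrow> real \<Rightarrow> real \<Rightarrow> real \<Rightarrow> real" where
  "Vf c cA lc g1 g2 L s z = (if z \<le> c * s - ln 2 / lc then 2 else if z < cA * s then exp (- lc * (z - c * s))
    else exp (- lc * (cA - c) * s) * exp (- (cA * (z - cA * s)) / 2)
      * (if z - cA * s < L then g1 (z - cA * s) else g2 (z - cA * s)))"

lemma H_ineq:
  fixes K e g g' \<rho> l Fv :: real
  assumes "K > 0" "e > 0" "g \<ge> 0" "lc * (cA - c) \<le> cA ^ 2 / 4 + l"
    and "Fv \<le> \<rho> * (K * e * g)"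
  shows "K * e * ((- lc * (cA - c) + cA ^ 2 / 2) * g - cA * g')
     \<ge> K * e * (- (\<rho> + l) * g - cA * g' + cA ^ 2 / 4 * g) + Fv"
proof -
  have "0 \<le> K * e * g * (cA ^ 2 / 4 + l - lc * (cA - c))"
    using assms by (intro mult_nonneg_nonneg) auto
  then show ?thesis using assms(5) by (simp add: algebra_simps)
qed



lemma mainM:
  fixes f :: "real \<Rightarrow> real \<Rightarrow> real \<Rightarrow> real" and r :: "real \<Rightarrow> real \<Rightarrow> real" and A :: "real \<Rightarrow> real"
  assumes lc: "lc > 0" and reg2: "lc ^ 2 + r1 \<le> lc * c" and ccA: "c \<le> cA"
    and reg3: "lc * (cA - c) \<le> cA ^ 2 / 4 + l" and L: "L > 0" and C: "C \<ge> 1" and T: "T > 0"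
    and g1d: "\<forall>w. (g1 has_real_derivative g1' w) (at w)"
    and g1dd: "\<forall>w. (g1' has_real_derivative (- (r2 + l) * g1 w)) (at w)"
    and g2d: "\<forall>w. (g2 has_real_derivative g2' w) (at w)"
    and g2dd: "\<forall>w. (g2' has_real_derivative (- (r3 + l) * g2 w)) (at w)"
    and g10: "g1 0 = 1" and g1pos: "\<forall>w. 0 \<le> w \<and> w \<le> L \<longrightarrow> 0 \<le> g1 w"
    and g2pos: "\<forall>w. L \<le> w \<longrightarrow> 0 \<le> g2 w" and gL: "g1 L = g2 L"
    and g1'0: "g1' 0 \<le> cA / 2 - lc" and g'L: "g2' L \<le> g1' L"
    and A_lin: "\<forall>t\<in>{tau..<tau + T}. A t = cA * (t - tau) + B"
    and r_def: "\<forall>t x. r t x = (if x < A t then r1 else if x < A t + L then r2 else r3)"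
    and f_kpp: "\<forall>t x u. u \<ge> 0 \<longrightarrow> f t x u \<le> r t x * u"
    and f_neg: "\<forall>t x u. u > 1 \<longrightarrow> f t x u < 0"
  shows "gen_supersolution f tau T (\<lambda>t x. C * Vf c cA lc g1 g2 L (t - tau) (x - B))"
proof -
  define U where "U = (\<lambda>t x. C * Vf c cA lc g1 g2 L (t - tau) (x - B))"
  define \<gamma>1 where "\<gamma>1 = (\<lambda>t::real. B + c * (t - tau) - ln 2 / lc)"
  define \<gamma>2 where "\<gamma>2 = (\<lambda>t::real. B + cA * (t - tau))"
  define \<gamma>3 where "\<gamma>3 = (\<lambda>t::real. B + cA * (t - tau) + L)"
  define G2 where "G2 = (\<lambda>t x. C * exp (- lc * (x - B - c * (t - tau))))"
  define H where "H = (\<lambda>g t x. C * exp (- lc * (cA - c) * (t - tau)) * exp (- (cA * (x - B - cA * (t - tau))) / 2)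
        * g (x - B - cA * (t - tau)))"
  have ln2: "ln 2 / lc > 0" using lc by simp
  have g12: "\<gamma>1 t < \<gamma>2 t" if "t \<ge> tau" for t
  proof -
    have "c * (t - tau) \<le> cA * (t - tau)" using ccA that by (intro mult_right_mono) auto
    then show ?thesis unfolding \<gamma>1_def \<gamma>2_def using ln2 by linarith
  qed
  have g23: "\<gamma>2 t < \<gamma>3 t" for t unfolding \<gamma>2_def \<gamma>3_def using L by simp
  have R1: "U t x = C * 2" if "x \<le> \<gamma>1 t" for t x
    using that unfolding U_def Vf_def \<gamma>1_def by (simp add: algebra_simps)
  have R2: "U t x = G2 t x" if "\<gamma>1 t < x" "x < \<gamma>2 t" for t x
    using that unfolding U_def Vf_def \<gamma>1_def \<gamma>2_def G2_def by (simp add: algebra_simps)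
  have R3: "U t x = H g1 t x" if "\<gamma>1 t < x" "\<gamma>2 t \<le> x" "x < \<gamma>3 t" for t x
    using that unfolding U_def Vf_def \<gamma>1_def \<gamma>2_def \<gamma>3_def H_def by (simp add: algebra_simps)
  have R4: "U t x = H g2 t x" if "\<gamma>1 t < x" "\<gamma>3 t \<le> x" for t x
    using that L unfolding U_def Vf_def \<gamma>1_def \<gamma>2_def \<gamma>3_def H_def by (simp add: algebra_simps)
  have B1: "G2 t (\<gamma>1 t) = C * 2" for t
    unfolding G2_def \<gamma>1_def using lc by (simp add: algebra_simps)
  have B2: "H g1 t (\<gamma>2 t) = G2 t (\<gamma>2 t)" for t
    unfolding G2_def \<gamma>2_def H_def using g10 by (simp add: algebra_simps mult_exp_exp[symmetric])
  have B3: "H g1 t (\<gamma>3 t) = H g2 t (\<gamma>3 t)" for t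
    unfolding H_def \<gamma>3_def using gL by simp
  have Ueq: "U t x = (if x - \<gamma>1 t \<le> 0 then C * 2 else if x - \<gamma>2 t \<le> 0 then G2 t x
      else if x - \<gamma>3 t \<le> 0 then H g1 t x else H g2 t x)" for t x
  proof -
    consider "x \<le> \<gamma>1 t" | "\<gamma>1 t < x" "x < \<gamma>2 t" | "\<gamma>1 t < x" "x = \<gamma>2 t"
      | "\<gamma>1 t < x" "\<gamma>2 t < x" "x < \<gamma>3 t" | "\<gamma>1 t < x" "\<gamma>2 t < x" "x = \<gamma>3 t"
      | "\<gamma>1 t < x" "\<gamma>3 t < x" by (smt (verit) g23)
    then show ?thesis
    proof cases
      case 1 then show ?thesis using R1 by simp
    next
      case 2 then show ?thesis using R2 by simp
    next
      case 3 then show ?thesis using R3[of t x] B2[of t] g23[of t] by simp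
    next
      case 4 then show ?thesis using R3[of t x] g23[of t] by simp
    next
      case 5 then show ?thesis using R4[of t x] B3[of t] g23[of t] by simp
    next
      case 6 then show ?thesis using R4[of t x] g23[of t] by simp
    qed
  qed
  have cg1: "continuous_on UNIV g1" using g1d by (meson DERIV_isCont continuous_at_imp_continuous_on)
  have cg2: "continuous_on UNIV g2" using g2d by (meson DERIV_isCont continuous_at_imp_continuous_on)
  have cH1: "continuous_on S (\<lambda>p. H g1 (fst p) (snd p))" for S
    unfolding H_def by (intro continuous_intros continuous_on_compose2[OF cg1]) auto
  have cH2: "continuous_on S (\<lambda>p. H g2 (fst p) (snd p))" for S
    unfolding H_def by (intro continuous_intros continuous_on_compose2[OF cg2]) auto
  have cG2: "continuous_on S (\<lambda>p. G2 (fst p) (snd p))" for S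
    unfolding G2_def by (intro continuous_intros)
  have ch: "continuous_on S (\<lambda>p. snd p - \<gamma> (fst p))" if "\<gamma> = \<gamma>1 \<or> \<gamma> = \<gamma>2 \<or> \<gamma> = \<gamma>3" for S \<gamma>
    using that unfolding \<gamma>1_def \<gamma>2_def \<gamma>3_def by (auto intro!: continuous_intros)
  have cont0: "continuous_on {p. tau \<le> fst p} (\<lambda>p. if snd p - \<gamma>1 (fst p) \<le> 0 then C * 2
      else if snd p - \<gamma>2 (fst p) \<le> 0 then G2 (fst p) (snd p)
      else if snd p - \<gamma>3 (fst p) \<le> 0 then H g1 (fst p) (snd p) else H g2 (fst p) (snd p))"
  proof (rule continuous_on_cases_le)
    show "continuous_on {p \<in> {p. tau \<le> fst p}. snd p - \<gamma>1 (fst p) \<le> 0} (\<lambda>p. C * 2)"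
      by (rule continuous_on_const)
    show "continuous_on {p. tau \<le> fst p} (\<lambda>p. snd p - \<gamma>1 (fst p))" by (rule ch) auto
    show "continuous_on {p \<in> {p. tau \<le> fst p}. 0 \<le> snd p - \<gamma>1 (fst p)} (\<lambda>p.
      if snd p - \<gamma>2 (fst p) \<le> 0 then G2 (fst p) (snd p)
      else if snd p - \<gamma>3 (fst p) \<le> 0 then H g1 (fst p) (snd p) else H g2 (fst p) (snd p))"
    proof (rule continuous_on_cases_le[OF cG2 _ ch])
      show "continuous_on {p \<in> {p \<in> {p. tau \<le> fst p}. 0 \<le> snd p - \<gamma>1 (fst p)}. 0 \<le> snd p - \<gamma>2 (fst p)}
        (\<lambda>p. if snd p - \<gamma>3 (fst p) \<le> 0 then H g1 (fst p) (snd p) else H g2 (fst p) (snd p))"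
        by (rule continuous_on_cases_le[OF cH1 cH2 ch]) (auto simp: B3[symmetric])
      show "\<And>p. p \<in> {p \<in> {p. tau \<le> fst p}. 0 \<le> snd p - \<gamma>1 (fst p)} \<Longrightarrow> snd p - \<gamma>2 (fst p) = 0 \<Longrightarrow>
         G2 (fst p) (snd p) = (if snd p - \<gamma>3 (fst p) \<le> 0 then H g1 (fst p) (snd p) else H g2 (fst p) (snd p))"
        using B2 g23 by (smt (verit))
    qed auto
    fix p assume "p \<in> {p. tau \<le> fst p}" "snd p - \<gamma>1 (fst p) = 0"
    then show "C * 2 = (if snd p - \<gamma>2 (fst p) \<le> 0 then G2 (fst p) (snd p)
      else if snd p - \<gamma>3 (fst p) \<le> 0 then H g1 (fst p) (snd p) else H g2 (fst p) (snd p))"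
      using B1[of "fst p"] g12[of "fst p"] by auto
  qed
  have contU: "continuous_on ({tau..<tau + T} \<times> UNIV) (\<lambda>(t, x). U t x)"
  proof -
    have "continuous_on {p. tau \<le> fst p} (\<lambda>p. U (fst p) (snd p))"
      using cont0 by (simp add: Ueq[abs_def])
    then have "continuous_on ({tau..<tau + T} \<times> UNIV) (\<lambda>p. U (fst p) (snd p))"
      by (rule continuous_on_subset) auto
    then show ?thesis by (simp add: case_prod_beta')
  qed
  have G2dx: "((\<lambda>z. G2 t z) has_real_derivative (- lc * G2 t y)) (at y)" for t y
    unfolding G2_def by (rule derivative_eq_intros refl | simp)+
  have G2dxx: "((\<lambda>z. - lc * G2 t z) has_real_derivative (lc ^ 2 * G2 t y)) (at y)" for t y
    unfolding G2_def by (rule derivative_eq_intros refl | simp add: power2_eq_square)+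
  have G2dt: "((\<lambda>s. G2 s x) has_real_derivative (lc * c * G2 t x)) (at t)" for t x
    unfolding G2_def by (rule derivative_eq_intros refl | simp)+
  have G2pos: "G2 t x > 0" for t x unfolding G2_def using C by simp
  define K where "K = (\<lambda>t. C * exp (- lc * (cA - c) * (t - tau)))"
  define E where "E = (\<lambda>t x. exp (- (cA * (x - B - cA * (t - tau))) / 2))"
  define w where "w = (\<lambda>t x. x - B - cA * (t - tau))"
  have Kpos: "K t > 0" for t unfolding K_def using C by simp
  have Epos: "E t x > 0" for t x unfolding E_def by simp
  have Hform: "H g t x = K t * E t x * g (w t x)" for g t x unfolding H_def K_def E_def w_def by simp
  have Hdx: "((\<lambda>z. H g t z) has_real_derivative K t * E t y * (g' (w t y) - cA / 2 * g (w t y))) (at y)"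
    if "\<forall>w. (g has_real_derivative g' w) (at w)" for g g' t y
    unfolding H_def K_def E_def w_def using H_dx[OF that, of "C * exp (- lc * (cA - c) * (t - tau))" cA B "cA * (t - tau)" y]
    by simp
  have Hdxx: "((\<lambda>y. K t * E t y * (g' (w t y) - cA / 2 * g (w t y))) has_real_derivative
      K t * E t x * (g'' (w t x) - cA * g' (w t x) + cA ^ 2 / 4 * g (w t x))) (at x)"
    if "\<forall>w. (g has_real_derivative g' w) (at w)" "\<forall>w. (g' has_real_derivative g'' w) (at w)" for g g' g'' t x
    unfolding K_def E_def w_def using H_dxx[OF that, of "C * exp (- lc * (cA - c) * (t - tau))" cA B "cA * (t - tau)" x]
    by simp
  have Hdt: "((\<lambda>s. H g s x) has_real_derivative
      K t * E t x * ((- lc * (cA - c) + cA ^ 2 / 2) * g (w t x) - cA * g' (w t x))) (at t)"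
    if "\<forall>w. (g has_real_derivative g' w) (at w)" for g g' t x
    unfolding H_def K_def E_def w_def using H_dt[OF that, of C lc cA c tau x B t] by simp
  have Ar: "A t = \<gamma>2 t" if "t \<in> {tau..<tau + T}" for t using A_lin that unfolding \<gamma>2_def by simp
  have cg: "continuous_on UNIV \<gamma>" if "\<gamma> = \<gamma>1 \<or> \<gamma> = \<gamma>2 \<or> \<gamma> = \<gamma>3" for \<gamma>
    using that unfolding \<gamma>1_def \<gamma>2_def \<gamma>3_def by (auto intro!: continuous_intros)
  have cgf: "continuous_on UNIV (\<lambda>p. \<gamma> (fst p))" if "\<gamma> = \<gamma>1 \<or> \<gamma> = \<gamma>2 \<or> \<gamma> = \<gamma>3" for \<gamma>
    using continuous_on_compose2[OF cg[OF that], of UNIV fst] continuous_on_fst[OF continuous_on_id] by auto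
  have csnd: "continuous_on UNIV (\<lambda>p::real\<times>real. snd p)" by (intro continuous_intros)
  have offc: "\<exists>e>0. \<exists>Ux. \<exists>Ut Uxx.
              (\<forall>y\<in>ball x e. ((\<lambda>z. U t z) has_real_derivative Ux y) (at y)) \<and>
              (Ux has_real_derivative Uxx) (at x) \<and>
              ((\<lambda>s. U s x) has_real_derivative Ut) (at t within {tau..<tau + T}) \<and>
              Ut \<ge> Uxx + f t x (U t x)"
    if t: "t \<in> {tau..<tau + T}" and x: "x \<noteq> \<gamma>1 t" "x \<noteq> \<gamma>2 t" "x \<noteq> \<gamma>3 t" for t x
  proof -
    have t0: "tau \<le> t" using t by simp
    have rx: "r t x = (if x < \<gamma>2 t then r1 else if x < \<gamma>3 t then r2 else r3)"
      using r_def Ar[OF t] unfolding \<gamma>2_def \<gamma>3_def by simp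
    consider "x < \<gamma>1 t" | "\<gamma>1 t < x" "x < \<gamma>2 t" | "\<gamma>2 t < x" "x < \<gamma>3 t" | "\<gamma>3 t < x"
      using x g12[OF t0] g23[of t] by linarith
    then show ?thesis
    proof cases
      case 1
      show ?thesis
      proof (rule offcurve[where W = "{p. snd p < \<gamma>1 (fst p)}" and G = "\<lambda>t x. C * 2"
            and Gx = "\<lambda>_. 0" and Gxx = 0 and Gt = 0])
        show "open {p. snd p < \<gamma>1 (fst p)}" by (rule open_Collect_less[OF csnd cgf]) simp
        show "(t, x) \<in> {p. snd p < \<gamma>1 (fst p)}" using 1 by simp
        show "\<forall>p\<in>{p. snd p < \<gamma>1 (fst p)}. U (fst p) (snd p) = C * 2" using R1 by auto
        show "0 \<ge> 0 + f t x (C * 2)" using f_neg C by (simp add: less_imp_le)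
      qed auto
    next
      case 2
      show ?thesis
      proof (rule offcurve[where W = "{p. \<gamma>1 (fst p) < snd p \<and> snd p < \<gamma>2 (fst p)}" and G = G2
            and Gx = "\<lambda>y. - lc * G2 t y" and Gxx = "lc ^ 2 * G2 t x" and Gt = "lc * c * G2 t x"])
        show "open {p. \<gamma>1 (fst p) < snd p \<and> snd p < \<gamma>2 (fst p)}"
          by (intro open_Collect_conj open_Collect_less csnd cgf) simp_all
        show "(t, x) \<in> {p. \<gamma>1 (fst p) < snd p \<and> snd p < \<gamma>2 (fst p)}" using 2 by simp
        show "\<forall>p\<in>{p. \<gamma>1 (fst p) < snd p \<and> snd p < \<gamma>2 (fst p)}. U (fst p) (snd p) = G2 (fst p) (snd p)"
          using R2 by auto
        have "f t x (G2 t x) \<le> r1 * G2 t x" using f_kpp G2pos[of t x] rx 2 by (metis less_imp_le)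
        moreover have "lc ^ 2 * G2 t x + r1 * G2 t x \<le> lc * c * G2 t x"
          using reg2 G2pos[of t x] by (metis distrib_right mult_right_mono less_imp_le)
        ultimately show "lc * c * G2 t x \<ge> lc ^ 2 * G2 t x + f t x (G2 t x)" by linarith
      qed (blast intro: G2dx G2dxx G2dt)+
    next
      case 3
      let ?W = "{p. \<gamma>1 (fst p) < snd p \<and> \<gamma>2 (fst p) < snd p \<and> snd p < \<gamma>3 (fst p)}"
      show ?thesis
      proof (rule offcurve[where W = ?W and G = "H g1"
            and Gx = "\<lambda>y. K t * E t y * (g1' (w t y) - cA / 2 * g1 (w t y))"
            and Gxx = "K t * E t x * (- (r2 + l) * g1 (w t x) - cA * g1' (w t x) + cA ^ 2 / 4 * g1 (w t x))"
            and Gt = "K t * E t x * ((- lc * (cA - c) + cA ^ 2 / 2) * g1 (w t x) - cA * g1' (w t x))"])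
        show "open ?W"
          by (intro open_Collect_conj open_Collect_less csnd cgf) simp_all
        show "(t, x) \<in> ?W" using 3 g12[OF t0] by simp
        show "\<forall>p\<in>?W. U (fst p) (snd p) = H g1 (fst p) (snd p)"
          using R3 by (auto simp: less_imp_le)
        show "\<forall>y. ((\<lambda>z. H g1 t z) has_real_derivative K t * E t y * (g1' (w t y) - cA / 2 * g1 (w t y))) (at y)"
          using Hdx[OF g1d] by blast
        show "((\<lambda>y. K t * E t y * (g1' (w t y) - cA / 2 * g1 (w t y))) has_real_derivative
          K t * E t x * (- (r2 + l) * g1 (w t x) - cA * g1' (w t x) + cA ^ 2 / 4 * g1 (w t x))) (at x)"
          using Hdxx[OF g1d g1dd] by blast
        show "((\<lambda>s. H g1 s x) has_real_derivative
           K t * E t x * ((- lc * (cA - c) + cA ^ 2 / 2) * g1 (w t x) - cA * g1' (w t x))) (at t)"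
          using Hdt[OF g1d] by blast
        have w: "0 \<le> w t x" "w t x \<le> L" using 3 unfolding w_def \<gamma>2_def \<gamma>3_def by auto
        have "f t x (H g1 t x) \<le> r2 * H g1 t x"
          using f_kpp rx 3 Hform[of g1 t x] Kpos[of t] Epos[of t x] g1pos w
          by (smt (verit) mult_nonneg_nonneg)
        then show "K t * E t x * ((- lc * (cA - c) + cA ^ 2 / 2) * g1 (w t x) - cA * g1' (w t x)) \<ge>
          K t * E t x * (- (r2 + l) * g1 (w t x) - cA * g1' (w t x) + cA ^ 2 / 4 * g1 (w t x)) + f t x (H g1 t x)"
          using H_ineq[OF Kpos[of t] Epos[of t x] _ reg3, of "g1 (w t x)" "f t x (H g1 t x)" r2 "g1' (w t x)"]
            g1pos w Hform[of g1 t x] by auto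
      qed
    next
      case 4
      let ?W = "{p. \<gamma>1 (fst p) < snd p \<and> \<gamma>3 (fst p) < snd p}"
      show ?thesis
      proof (rule offcurve[where W = ?W and G = "H g2"
            and Gx = "\<lambda>y. K t * E t y * (g2' (w t y) - cA / 2 * g2 (w t y))"
            and Gxx = "K t * E t x * (- (r3 + l) * g2 (w t x) - cA * g2' (w t x) + cA ^ 2 / 4 * g2 (w t x))"
            and Gt = "K t * E t x * ((- lc * (cA - c) + cA ^ 2 / 2) * g2 (w t x) - cA * g2' (w t x))"])
        show "open ?W"
          by (intro open_Collect_conj open_Collect_less csnd cgf) simp_all
        show "(t, x) \<in> ?W" using 4 g12[OF t0] g23[of t] by simp
        show "\<forall>p\<in>?W. U (fst p) (snd p) = H g2 (fst p) (snd p)"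
          using R4 by (auto simp: less_imp_le)
        show "\<forall>y. ((\<lambda>z. H g2 t z) has_real_derivative K t * E t y * (g2' (w t y) - cA / 2 * g2 (w t y))) (at y)"
          using Hdx[OF g2d] by blast
        show "((\<lambda>y. K t * E t y * (g2' (w t y) - cA / 2 * g2 (w t y))) has_real_derivative
          K t * E t x * (- (r3 + l) * g2 (w t x) - cA * g2' (w t x) + cA ^ 2 / 4 * g2 (w t x))) (at x)"
          using Hdxx[OF g2d g2dd] by blast
        show "((\<lambda>s. H g2 s x) has_real_derivative
           K t * E t x * ((- lc * (cA - c) + cA ^ 2 / 2) * g2 (w t x) - cA * g2' (w t x))) (at t)"
          using Hdt[OF g2d] by blast
        have w: "L \<le> w t x" using 4 unfolding w_def \<gamma>3_def by auto
        have "f t x (H g2 t x) \<le> r3 * H g2 t x"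
          using f_kpp rx 4 Hform[of g2 t x] Kpos[of t] Epos[of t x] g2pos w g23[of t]
          by (smt (verit) mult_nonneg_nonneg)
        then show "K t * E t x * ((- lc * (cA - c) + cA ^ 2 / 2) * g2 (w t x) - cA * g2' (w t x)) \<ge>
          K t * E t x * (- (r3 + l) * g2 (w t x) - cA * g2' (w t x) + cA ^ 2 / 4 * g2 (w t x)) + f t x (H g2 t x)"
          using H_ineq[OF Kpos[of t] Epos[of t x] _ reg3, of "g2 (w t x)" "f t x (H g2 t x)" r3 "g2' (w t x)"]
            g2pos w Hform[of g2 t x] by auto
      qed
    qed
  qed
  have iface: "\<exists>dl dr. ((\<lambda>z. U t z) has_real_derivative dl) (at_left (\<gamma> t)) \<and>
      ((\<lambda>z. U t z) has_real_derivative dr) (at_right (\<gamma> t)) \<and> dl \<ge> dr"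
    if t: "t \<in> {tau..<tau + T}" and \<gamma>: "\<gamma> \<in> {\<gamma>1, \<gamma>2, \<gamma>3}" for t \<gamma>
  proof -
    have t0: "tau \<le> t" using t by simp
    note g12[OF t0] g23[of t]
    have w2: "w t (\<gamma>2 t) = 0" and w3: "w t (\<gamma>3 t) = L" unfolding w_def \<gamma>2_def \<gamma>3_def by simp_all
    have E2: "E t (\<gamma>2 t) = 1" unfolding E_def \<gamma>2_def by simp
    have D1: "((\<lambda>z. U t z) has_real_derivative 0) (at_left (\<gamma>1 t))"
      by (rule iface_left[where G = "\<lambda>_. C * 2" and d = 1]) (auto simp: R1)
    have D2: "((\<lambda>z. U t z) has_real_derivative - lc * G2 t (\<gamma>1 t)) (at_right (\<gamma>1 t))"
      apply (rule iface_right[where G = "G2 t" and d = "\<gamma>2 t - \<gamma>1 t", OF G2dx])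
      using g12[OF t0] R2 R1 B1 by (auto, metis order.order_iff_strict)
    have D3: "((\<lambda>z. U t z) has_real_derivative - lc * G2 t (\<gamma>2 t)) (at_left (\<gamma>2 t))"
      apply (rule iface_left[where G = "G2 t" and d = "\<gamma>2 t - \<gamma>1 t", OF G2dx])
      using g12[OF t0] g23[of t] R2 R3 B2 by (auto, metis order.order_iff_strict order.refl)
    have D4: "((\<lambda>z. U t z) has_real_derivative K t * E t (\<gamma>2 t) * (g1' (w t (\<gamma>2 t)) - cA / 2 * g1 (w t (\<gamma>2 t))))
       (at_right (\<gamma>2 t))"
      apply (rule iface_right[where G = "H g1 t" and d = "L", OF Hdx[OF g1d]])
      using g12[OF t0] g23[of t] R3 L unfolding \<gamma>2_def \<gamma>3_def by auto
    have D5: "((\<lambda>z. U t z) has_real_derivative K t * E t (\<gamma>3 t) * (g1' (w t (\<gamma>3 t)) - cA / 2 * g1 (w t (\<gamma>3 t))))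
       (at_left (\<gamma>3 t))"
      apply (rule iface_left[where G = "H g1 t" and d = "L", OF Hdx[OF g1d]])
      using g12[OF t0] g23[of t] R3 R4 B3 L unfolding \<gamma>2_def \<gamma>3_def
      by (auto, smt (verit))
    have D6: "((\<lambda>z. U t z) has_real_derivative K t * E t (\<gamma>3 t) * (g2' (w t (\<gamma>3 t)) - cA / 2 * g2 (w t (\<gamma>3 t))))
       (at_right (\<gamma>3 t))"
      apply (rule iface_right[where G = "H g2 t" and d = "1", OF Hdx[OF g2d]])
      using g12[OF t0] g23[of t] R4 by auto
    have I1: "- lc * G2 t (\<gamma>1 t) \<le> 0" using lc G2pos[of t "\<gamma>1 t"] by simp
    have G2H: "G2 t (\<gamma>2 t) = K t" using B2[of t] Hform[of g1 t "\<gamma>2 t"] w2 E2 g10 by simp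
    have I2: "K t * E t (\<gamma>2 t) * (g1' (w t (\<gamma>2 t)) - cA / 2 * g1 (w t (\<gamma>2 t))) \<le> - lc * G2 t (\<gamma>2 t)"
    proof -
      have "K t * (g1' 0 - cA / 2) \<le> K t * (- lc)" using g1'0 Kpos[of t] by (intro mult_left_mono) auto
      then show ?thesis using G2H w2 E2 g10 by (simp add: mult.commute)
    qed
    have I3: "K t * E t (\<gamma>3 t) * (g2' (w t (\<gamma>3 t)) - cA / 2 * g2 (w t (\<gamma>3 t))) \<le>
        K t * E t (\<gamma>3 t) * (g1' (w t (\<gamma>3 t)) - cA / 2 * g1 (w t (\<gamma>3 t)))"
      using w3 gL g'L Kpos[of t] Epos[of t "\<gamma>3 t"] by (intro mult_left_mono) auto
    from \<gamma> show ?thesis using D1 D2 D3 D4 D5 D6 I1 I2 I3 by blast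
  qed
  show ?thesis unfolding gen_supersolution_def U_def[symmetric]
  proof (intro conjI contU exI[of _ "{\<gamma>1, \<gamma>2, \<gamma>3}"] ballI allI impI)
    show "finite {\<gamma>1, \<gamma>2, \<gamma>3}" by simp
    show "continuous_on {tau..<tau + T} \<gamma>" if "\<gamma> \<in> {\<gamma>1, \<gamma>2, \<gamma>3}" for \<gamma>
      using cg[of \<gamma>] that continuous_on_subset by blast
  qed (use offc iface in auto)
qed



lemma C3_of_props:
  assumes s: "s > 0"
  shows "C3_of s = arctan (1 / s)" "0 < C3_of s" "C3_of s < pi / 2" "cot (C3_of s) = s"
proof -
  let ?C = "arctan (1 / s)"
  have P: "0 < ?C \<and> ?C < pi / 2 \<and> cot ?C = s"
  proof (intro conjI)
    show "0 < ?C" using s by simp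
    show "?C < pi / 2" by (rule arctan_ubound)
    have "tan ?C = 1 / s" by (rule tan_arctan)
    moreover have "cot ?C = 1 / tan ?C" by (simp add: cot_def tan_def)
    ultimately show "cot ?C = s" by simp
  qed
  have U: "C = ?C" if "0 < C \<and> C < pi / 2 \<and> cot C = s" for C
  proof -
    have "cos C > 0" using that by (intro cos_gt_zero_pi) auto
    moreover have "sin C > 0" using that by (intro sin_gt_zero) auto
    moreover have "1 / s = sin C / cos C"
    proof -
      have "s = cos C / sin C" using that by (simp add: cot_def)
      then show ?thesis by simp
    qed
    ultimately have "tan C = 1 / s" by (simp add: tan_def)
    then have "arctan (tan C) = ?C" by simp
    moreover have "arctan (tan C) = C" using that by (intro arctan_tan) auto
    ultimately show ?thesis by simp
  qed
  have "C3_of s = ?C" unfolding C3_of_def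
    by (rule the_equality) (use P U in auto)
  then show "C3_of s = arctan (1 / s)" "0 < C3_of s" "C3_of s < pi / 2" "cot (C3_of s) = s"
    using P by auto
qed

lemma cot_strict_decr:
  assumes "0 < a" "a < b" "b < pi"
  shows "cot b < cot a"
proof -
  have sa: "sin a > 0" and sb: "sin b > 0" using assms by (auto intro!: sin_gt_zero)
  have "sin (b - a) > 0" using assms by (auto intro!: sin_gt_zero)
  then have "cos b * sin a < cos a * sin b" by (simp add: sin_diff algebra_simps)
  then show ?thesis using sa sb by (simp add: cot_def divide_simps mult.commute)
qed

lemma R_mono:
  fixes u1 u2 p1 p2 q1 q2 :: real
  assumes "0 < u1" "u1 < u2" "0 < p2" "p2 < p1" "0 < q2" "q2 < q1"
  shows "(u1 ^ 2 - p1 * q1) / (u1 * (p1 + q1)) < (u2 ^ 2 - p2 * q2) / (u2 * (p2 + q2))"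
proof -
  have n1: "p1 + q1 \<noteq> 0" "u1 \<noteq> 0" "p2 + q2 \<noteq> 0" "u2 \<noteq> 0" using assms by auto
  have e1: "(u1 ^ 2 - p1 * q1) / (u1 * (p1 + q1)) = u1 / (p1 + q1) - (p1 * q1 / (p1 + q1)) / u1"
  proof -
    have "u1 / (p1 + q1) = u1 ^ 2 / (u1 * (p1 + q1))" using n1 by (simp add: power2_eq_square)
    moreover have "(p1 * q1 / (p1 + q1)) / u1 = p1 * q1 / (u1 * (p1 + q1))" by (simp add: mult.commute)
    ultimately show ?thesis by (simp add: diff_divide_distrib)
  qed
  have e2: "(u2 ^ 2 - p2 * q2) / (u2 * (p2 + q2)) = u2 / (p2 + q2) - (p2 * q2 / (p2 + q2)) / u2"
  proof -
    have "u2 / (p2 + q2) = u2 ^ 2 / (u2 * (p2 + q2))" using n1 by (simp add: power2_eq_square)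
    moreover have "(p2 * q2 / (p2 + q2)) / u2 = p2 * q2 / (u2 * (p2 + q2))" by (simp add: mult.commute)
    ultimately show ?thesis by (simp add: diff_divide_distrib)
  qed
  have a1: "u1 / (p1 + q1) < u2 / (p2 + q2)"
    using assms by (intro frac_less) auto
  have hm: "p2 * q2 / (p2 + q2) \<le> p1 * q1 / (p1 + q1)"
  proof -
    have "p2 * q2 * (p1 + q1) \<le> p1 * q1 * (p2 + q2)"
    proof -
      have "0 \<le> p1 * p2 * (q1 - q2) + q1 * q2 * (p1 - p2)" using assms by simp
      then show ?thesis by (simp add: algebra_simps)
    qed
    then show ?thesis using assms by (simp add: divide_simps mult.commute)
  qed
  have a2: "(p2 * q2 / (p2 + q2)) / u2 < (p1 * q1 / (p1 + q1)) / u1"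
    using assms hm by (intro frac_less2) auto
  show ?thesis using e1 e2 a1 a2 by linarith
qed


lemma inI:
  fixes r1 r2 r3 L l :: real
  assumes L: "L > 0" and r2_gt: "r2 > max r1 r3"
    and l: "- r2 < l" "l < min (- max r1 r3) (pi ^ 2 / L ^ 2 - r2)"
  shows "sqrt (r2 + l) > 0" "sqrt (- r1 - l) > 0" "sqrt (- r3 - l) > 0"
    "sqrt ((r1 + l) * (r3 + l)) = sqrt (- r1 - l) * sqrt (- r3 - l)"
    "sqrt (r2 + l) ^ 2 = r2 + l" "0 < L * sqrt (r2 + l)" "L * sqrt (r2 + l) < pi"
proof -
  show "sqrt (r2 + l) > 0" "sqrt (- r1 - l) > 0" "sqrt (- r3 - l) > 0" using l by auto
  show "sqrt ((r1 + l) * (r3 + l)) = sqrt (- r1 - l) * sqrt (- r3 - l)"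
    by (simp add: real_sqrt_mult[symmetric] algebra_simps)
  show "sqrt (r2 + l) ^ 2 = r2 + l" using l by simp
  show "0 < L * sqrt (r2 + l)" using l L by simp
  have "r2 + l < (pi / L) ^ 2" using l by (simp add: power_divide)
  then have "sqrt (r2 + l) < pi / L"
    using real_sqrt_less_mono[of "r2 + l" "(pi / L) ^ 2"] L by simp
  then show "L * sqrt (r2 + l) < pi" using L by (simp add: field_simps)
qed


definition Peq :: "real \<Rightarrow> real \<Rightarrow> real \<Rightarrow> real \<Rightarrow> real \<Rightarrow> bool" where
  "Peq r1 r2 r3 L l \<longleftrightarrow> - r2 < l \<and> l < min (- max r1 r3) (pi ^ 2 / L ^ 2 - r2) \<and>
        cot (L * sqrt (r2 + l)) =
          (r2 + l - sqrt ((r1 + l) * (r3 + l))) /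
          (sqrt (r2 + l) * (sqrt (- r1 - l) + sqrt (- r3 - l)))"

lemma Peq_uniq_aux:
  assumes L: "L > 0" and r2_gt: "r2 > max r1 r3"
    and P1: "Peq r1 r2 r3 L l1" and P2: "Peq r1 r2 r3 L l2" and lt: "l1 < l2"
  shows False
proof -
  note i1 = inI[OF L r2_gt, of l1] and i2 = inI[OF L r2_gt, of l2]
  have b1: "- r2 < l1" "l1 < min (- max r1 r3) (pi ^ 2 / L ^ 2 - r2)" using P1 by (auto simp: Peq_def)
  have b2: "- r2 < l2" "l2 < min (- max r1 r3) (pi ^ 2 / L ^ 2 - r2)" using P2 by (auto simp: Peq_def)
  have u: "sqrt (r2 + l1) < sqrt (r2 + l2)" using lt by simp
  have p: "sqrt (- r1 - l2) < sqrt (- r1 - l1)" using lt by simp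
  have q: "sqrt (- r3 - l2) < sqrt (- r3 - l1)" using lt by simp
  have c: "cot (L * sqrt (r2 + l2)) < cot (L * sqrt (r2 + l1))"
    using cot_strict_decr[of "L * sqrt (r2 + l1)" "L * sqrt (r2 + l2)"] i1(6)[OF b1] i2(7)[OF b2] u L by simp
  have R: "(sqrt (r2 + l1) ^ 2 - sqrt (- r1 - l1) * sqrt (- r3 - l1)) / (sqrt (r2 + l1) * (sqrt (- r1 - l1) + sqrt (- r3 - l1)))
     < (sqrt (r2 + l2) ^ 2 - sqrt (- r1 - l2) * sqrt (- r3 - l2)) / (sqrt (r2 + l2) * (sqrt (- r1 - l2) + sqrt (- r3 - l2)))"
    by (rule R_mono) (use i1[OF b1] i2[OF b2] u p q in auto)
  show False using c R P1 P2 i1[OF b1] i2[OF b2] unfolding Peq_def by simp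
qed

lemma Peq_uniq:
  assumes L: "L > 0" and r2_gt: "r2 > max r1 r3"
    and P1: "Peq r1 r2 r3 L l1" and P2: "Peq r1 r2 r3 L l2"
  shows "l1 = l2"
  using Peq_uniq_aux[OF L r2_gt P1 P2] Peq_uniq_aux[OF L r2_gt P2 P1] by fastforce


lemma ev_at_left_less: "eventually (\<lambda>y. y < (x::real)) (at_left x)"
  unfolding eventually_at_left_field by (intro exI[of _ "x - 1"]) auto

lemma ev_happens_right: "eventually P (at_right (x::real)) \<Longrightarrow> \<exists>y. P y"
  using eventually_happens[of P "at_right x"] by auto

lemma ev_happens_left: "eventually P (at_left (x::real)) \<Longrightarrow> \<exists>y. P y"
  using eventually_happens[of P "at_left x"] by auto

definition Hf :: "real \<Rightarrow> real \<Rightarrow> real \<Rightarrow> real \<Rightarrow> real \<Rightarrow> real" where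
  "Hf r1 r2 r3 L l = cos (L * sqrt (r2 + l)) * (sqrt (r2 + l) * (sqrt (- r1 - l) + sqrt (- r3 - l)))
     - sin (L * sqrt (r2 + l)) * (r2 + l - sqrt ((r1 + l) * (r3 + l)))"

lemma Hf_cont: "continuous_on UNIV (Hf r1 r2 r3 L)"
  unfolding Hf_def by (intro continuous_intros)

lemma Hf_tendsto: "(Hf r1 r2 r3 L \<longlongrightarrow> Hf r1 r2 r3 L m) (at_left m)"
  using Hf_cont[of r1 r2 r3 L] by (meson UNIV_I continuous_on_def filterlim_at_split tendsto_at_iff_tendsto_nhds)

lemma Hf_zero_Peq:
  assumes L: "L > 0" and r2_gt: "r2 > max r1 r3"
    and l: "- r2 < l" "l < min (- max r1 r3) (pi ^ 2 / L ^ 2 - r2)" and H: "Hf r1 r2 r3 L l = 0"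
  shows "Peq r1 r2 r3 L l"
proof -
  note i = inI[OF L r2_gt l]
  have s: "sin (L * sqrt (r2 + l)) > 0" using i by (intro sin_gt_zero) auto
  have D: "sqrt (r2 + l) * (sqrt (- r1 - l) + sqrt (- r3 - l)) > 0" using i(1-3) by (intro mult_pos_pos add_pos_pos)
  from H have "cos (L * sqrt (r2 + l)) * (sqrt (r2 + l) * (sqrt (- r1 - l) + sqrt (- r3 - l)))
     = sin (L * sqrt (r2 + l)) * (r2 + l - sqrt ((r1 + l) * (r3 + l)))" by (simp add: Hf_def)
  then have "cot (L * sqrt (r2 + l)) =
          (r2 + l - sqrt ((r1 + l) * (r3 + l))) /
          (sqrt (r2 + l) * (sqrt (- r1 - l) + sqrt (- r3 - l)))"
    using s D by (simp add: cot_def field_simps)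
  then show ?thesis using l by (simp add: Peq_def)
qed


lemma Hf_left_pt:
  assumes L: "L > 0" and r2_gt: "r2 > max r1 r3"
    and mid: "- r2 < mid" "mid \<le> min (- max r1 r3) (pi ^ 2 / L ^ 2 - r2)"
  shows "\<exists>a. - r2 < a \<and> a < mid \<and> Hf r1 r2 r3 L a > 0"
proof -
  have pr: "(r1 + - r2) * (r3 + - r2) > 0" using r2_gt by (intro mult_neg_neg) auto
  have "((\<lambda>l. r2 + l - sqrt ((r1 + l) * (r3 + l))) \<longlongrightarrow> r2 + - r2 - sqrt ((r1 + - r2) * (r3 + - r2))) (at_right (- r2))"
    by (intro tendsto_intros)
  moreover have "r2 + - r2 - sqrt ((r1 + - r2) * (r3 + - r2)) < 0" using pr by simp
  ultimately have e1: "eventually (\<lambda>l. r2 + l - sqrt ((r1 + l) * (r3 + l)) < 0) (at_right (- r2))"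
    by (rule order_tendstoD(2))
  have "((\<lambda>l. L * sqrt (r2 + l)) \<longlongrightarrow> L * sqrt (r2 + - r2)) (at_right (- r2))"
    by (intro tendsto_intros)
  then have e2: "eventually (\<lambda>l. L * sqrt (r2 + l) < pi / 2) (at_right (- r2))"
    by (rule order_tendstoD(2)) simp
  have "((\<lambda>l. l) \<longlongrightarrow> - r2) (at_right (- r2))" by (intro tendsto_intros)
  then have e3: "eventually (\<lambda>l. l < mid) (at_right (- r2))"
    by (rule order_tendstoD(2)) (use mid in simp)
  have "eventually (\<lambda>l. r2 + l - sqrt ((r1 + l) * (r3 + l)) < 0 \<and> L * sqrt (r2 + l) < pi / 2 \<and> l < mid \<and> - r2 < l) (at_right (- r2))"
    using e1 e2 e3 eventually_at_right_less[of "- r2"] by eventually_elim auto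
  then obtain a where a: "r2 + a - sqrt ((r1 + a) * (r3 + a)) < 0" "L * sqrt (r2 + a) < pi / 2" "a < mid" "- r2 < a"
    using ev_happens_right by blast
  have aI: "a < min (- max r1 r3) (pi ^ 2 / L ^ 2 - r2)" using a mid by linarith
  note i = inI[OF L r2_gt a(4) aI]
  have c: "cos (L * sqrt (r2 + a)) > 0" using a i by (intro cos_gt_zero_pi) auto
  have s: "sin (L * sqrt (r2 + a)) > 0" using i by (intro sin_gt_zero) auto
  have D: "sqrt (r2 + a) * (sqrt (- r1 - a) + sqrt (- r3 - a)) > 0" using i(1-3) by (intro mult_pos_pos add_pos_pos)
  have "cos (L * sqrt (r2 + a)) * (sqrt (r2 + a) * (sqrt (- r1 - a) + sqrt (- r3 - a))) > 0"
    using c D by simp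
  moreover have "sin (L * sqrt (r2 + a)) * (r2 + a - sqrt ((r1 + a) * (r3 + a))) < 0"
    using s a(1) by (simp add: mult_pos_neg)
  ultimately show ?thesis using a unfolding Hf_def by (intro exI[of _ a]) auto
qed


lemma cos_neg_mid: "pi / 2 < x \<Longrightarrow> x < 3 * pi / 2 \<Longrightarrow> cos x < 0"
proof -
  assume a: "pi / 2 < x" "x < 3 * pi / 2"
  have "cos (x - pi) > 0" using a by (intro cos_gt_zero_pi) auto
  then show ?thesis by simp
qed

lemma Hf_m_claim:
  assumes pos: "r1 > 0" "r3 > 0" and L: "L > 0" and r2_gt: "r2 > max r1 r3" and LL: "Lbar r1 r2 r3 < L"
    and m: "m = min (- max r1 r3) (pi ^ 2 / L ^ 2 - r2)"
  shows "Hf r1 r2 r3 L m < 0 \<or> (r1 = r3 \<and> m = - r1 \<and> L * sqrt (r2 + m) = pi)"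
proof -
  have mr2: "- r2 < m" using m r2_gt L by auto
  have um: "sqrt (r2 + m) > 0" using mr2 by simp
  have "r2 + m \<le> (pi / L) ^ 2" using m by (simp add: power_divide)
  then have "sqrt (r2 + m) \<le> pi / L" using real_sqrt_le_mono[of "r2 + m" "(pi / L) ^ 2"] L by simp
  then have th: "L * sqrt (r2 + m) \<le> pi" using L by (simp add: field_simps)
  have th0: "0 < L * sqrt (r2 + m)" using L um by simp
  show ?thesis
  proof (cases "m < - max r1 r3")
    case True
    then have m2: "m = pi ^ 2 / L ^ 2 - r2" using m by linarith
    have "sqrt (r2 + m) = pi / L" using m2 L by (simp add: power_divide[symmetric])
    then have "L * sqrt (r2 + m) = pi" using L by simp
    moreover have "sqrt (- r1 - m) > 0" using True by simp
    moreover have "sqrt (- r3 - m) \<ge> 0" using True by simp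
    ultimately have "Hf r1 r2 r3 L m = - (sqrt (r2 + m) * (sqrt (- r1 - m) + sqrt (- r3 - m)))"
      by (simp add: Hf_def)
    moreover have "sqrt (r2 + m) * (sqrt (- r1 - m) + sqrt (- r3 - m)) > 0"
      using um \<open>sqrt (- r1 - m) > 0\<close> \<open>sqrt (- r3 - m) \<ge> 0\<close> by (intro mult_pos_pos add_pos_nonneg) auto
    ultimately show ?thesis by simp
  next
    case False
    then have mM: "m = - max r1 r3" using m by linarith
    show ?thesis
    proof (cases "r1 = r3")
      case True
      then have m1: "m = - r1" using mM by simp
      have "Hf r1 r2 r3 L m = - (sin (L * sqrt (r2 + m)) * (r2 + m))" using m1 True by (simp add: Hf_def)
      show ?thesis
      proof (cases "L * sqrt (r2 + m) = pi")
        case True then show ?thesis using m1 \<open>r1 = r3\<close> by simp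
      next
        case False
        then have "sin (L * sqrt (r2 + m)) > 0" using th th0 by (intro sin_gt_zero) auto
        then show ?thesis using \<open>Hf r1 r2 r3 L m = _\<close> mr2 by (simp add: mult_pos_pos)
      qed
    next
      case ne: False
      define d where "d = \<bar>r1 - r3\<bar>"
      define u where "u = sqrt (r2 + m)"
      have d0: "d > 0" using ne by (simp add: d_def)
      have prod0: "(r1 + m) * (r3 + m) = 0" using mM by (auto simp: max_def)
      have sumd: "sqrt (- r1 - m) + sqrt (- r3 - m) = sqrt d" using mM by (auto simp: max_def d_def)
      have Hm0: "Hf r1 r2 r3 L m = cos (L * u) * (u * sqrt d) - sin (L * u) * (u * u)"
        unfolding Hf_def u_def using prod0 sumd mr2 by simp
      have Hm: "Hf r1 r2 r3 L m = u * (sqrt d * cos (L * u) - u * sin (L * u))"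
        unfolding Hm0 by (simp add: algebra_simps)
      define v where "v = u / sqrt d"
      have v0: "v > 0" using um d0 by (simp add: v_def u_def)
      have Lb: "Lbar r1 r2 r3 = 1 / u * (pi / 2 - arctan v)"
        using ne mM unfolding Lbar_def arccot_def u_def v_def d_def
        by (simp add: real_sqrt_divide)
      define \<phi> where "\<phi> = arctan v"
      have \<phi>: "0 < \<phi>" "\<phi> < pi / 2" using v0 arctan_ubound by (auto simp: \<phi>_def)
      have "pi / 2 - \<phi> < L * u" using LL Lb um unfolding \<phi>_def u_def by (simp add: field_simps)
      then have "cos (L * u + \<phi>) < 0" using \<phi> th unfolding u_def by (intro cos_neg_mid) auto
      moreover have "cos (L * u + \<phi>) = (cos (L * u) - v * sin (L * u)) / sqrt (1 + v ^ 2)"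
      proof -
        have "sqrt (1 + v ^ 2) > 0" by (simp add: add_pos_nonneg)
        then show ?thesis by (simp add: cos_add \<phi>_def cos_arctan sin_arctan field_simps)
      qed
      ultimately have "cos (L * u) - v * sin (L * u) < 0"
        by (simp add: divide_less_0_iff) (metis add_pos_nonneg zero_less_one zero_le_power2 not_less_iff_gr_or_eq)
      then have "sqrt d * (cos (L * u) - v * sin (L * u)) < 0" using d0 by (simp add: mult_pos_neg)
      moreover have "sqrt d * v = u" using d0 by (simp add: v_def)
      then have e: "u * sin (L * u) = sqrt d * v * sin (L * u)" by simp
      have "sqrt d * cos (L * u) - sqrt d * v * sin (L * u) < 0"
        using \<open>sqrt d * (cos (L * u) - v * sin (L * u)) < 0\<close> by (simp add: right_diff_distrib mult.assoc)
      then have "sqrt d * cos (L * u) - u * sin (L * u) < 0" using e by linarith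
      then show ?thesis using Hm um by (simp add: u_def mult_pos_neg)
    qed
  qed
qed


lemma Hf_right_pt:
  assumes pos: "r1 > 0" "r3 > 0" and L: "L > 0" and r2_gt: "r2 > max r1 r3" and LL: "Lbar r1 r2 r3 < L"
    and m: "m = min (- max r1 r3) (pi ^ 2 / L ^ 2 - r2)" and mid: "- r2 < mid" "mid < m"
  shows "\<exists>b. mid < b \<and> b < m \<and> Hf r1 r2 r3 L b < 0"
proof -
  have "((\<lambda>l. l) \<longlongrightarrow> m) (at_left m)" by (intro tendsto_intros)
  then have e1: "eventually (\<lambda>l. mid < l) (at_left m)"
    by (rule order_tendstoD(1)) (use mid in simp)
  note e2 = ev_at_left_less[of m]
  consider "Hf r1 r2 r3 L m < 0" | "r1 = r3" "m = - r1" "L * sqrt (r2 + m) = pi"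
    using Hf_m_claim[OF pos L r2_gt LL m] by blast
  then show ?thesis
  proof cases
    case 1
    have "eventually (\<lambda>l. Hf r1 r2 r3 L l < 0) (at_left m)"
      using Hf_tendsto[of r1 r2 r3 L m] 1 by (rule order_tendstoD(2))
    then have "eventually (\<lambda>l. mid < l \<and> l < m \<and> Hf r1 r2 r3 L l < 0) (at_left m)"
      using e1 e2 by eventually_elim auto
    then show ?thesis using ev_happens_left by blast
  next
    case 2
    have "((\<lambda>l. r2 + l - sqrt ((r1 + l) * (r3 + l))) \<longlongrightarrow> r2 + m - sqrt ((r1 + m) * (r3 + m))) (at_left m)"
      by (intro tendsto_intros)
    moreover have "r2 + m - sqrt ((r1 + m) * (r3 + m)) > 0" using 2 r2_gt by simp
    ultimately have e3: "eventually (\<lambda>l. r2 + l - sqrt ((r1 + l) * (r3 + l)) > 0) (at_left m)"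
      by (rule order_tendstoD(1))
    have "((\<lambda>l. L * sqrt (r2 + l)) \<longlongrightarrow> L * sqrt (r2 + m)) (at_left m)"
      by (intro tendsto_intros)
    then have e4: "eventually (\<lambda>l. pi / 2 < L * sqrt (r2 + l)) (at_left m)"
      by (rule order_tendstoD(1)) (use 2 in simp)
    have "eventually (\<lambda>l. mid < l \<and> l < m \<and> r2 + l - sqrt ((r1 + l) * (r3 + l)) > 0 \<and> pi / 2 < L * sqrt (r2 + l)) (at_left m)"
      using e1 e2 e3 e4 by eventually_elim auto
    then obtain b where b: "mid < b" "b < m" "r2 + b - sqrt ((r1 + b) * (r3 + b)) > 0" "pi / 2 < L * sqrt (r2 + b)"
      using ev_happens_left by blast
    have bI: "- r2 < b" "b < min (- max r1 r3) (pi ^ 2 / L ^ 2 - r2)" using b mid m by auto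
    note i = inI[OF L r2_gt bI]
    have c: "cos (L * sqrt (r2 + b)) < 0" using b i by (intro cos_neg_mid) auto
    have s: "sin (L * sqrt (r2 + b)) > 0" using i by (intro sin_gt_zero) auto
    have D: "sqrt (r2 + b) * (sqrt (- r1 - b) + sqrt (- r3 - b)) > 0" using i(1-3) by (intro mult_pos_pos add_pos_pos)
    have "cos (L * sqrt (r2 + b)) * (sqrt (r2 + b) * (sqrt (- r1 - b) + sqrt (- r3 - b))) < 0"
      using c D by (simp add: mult_neg_pos)
    moreover have "sin (L * sqrt (r2 + b)) * (r2 + b - sqrt ((r1 + b) * (r3 + b))) > 0"
      using s b(3) by simp
    ultimately show ?thesis using b unfolding Hf_def by (intro exI[of _ b]) auto
  qed
qed

lemma lambda1_case1:
  assumes pos: "r1 > 0" "r3 > 0" and L: "L > 0" and r2_gt: "r2 > max r1 r3" and LL: "Lbar r1 r2 r3 < L"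
  shows "Peq r1 r2 r3 L (lambda1 r1 r2 r3 L)"
proof -
  define m where "m = min (- max r1 r3) (pi ^ 2 / L ^ 2 - r2)"
  have mr2: "- r2 < m" using r2_gt L by (auto simp: m_def)
  define mid where "mid = (- r2 + m) / 2"
  have mid: "- r2 < mid" "mid < m" using mr2 by (auto simp: mid_def)
  obtain a where a: "- r2 < a" "a < mid" "Hf r1 r2 r3 L a > 0"
    using Hf_left_pt[OF L r2_gt mid(1)] mid(2) by (auto simp: m_def)
  obtain b where b: "mid < b" "b < m" "Hf r1 r2 r3 L b < 0"
    using Hf_right_pt[OF pos L r2_gt LL m_def mid] by blast
  have cab: "continuous_on {a..b} (Hf r1 r2 r3 L)" using Hf_cont by (rule continuous_on_subset) auto
  have ab: "a \<le> b" using a b by linarith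
  obtain l where l: "a \<le> l" "l \<le> b" "Hf r1 r2 r3 L l = 0"
    using IVT2'[of "Hf r1 r2 r3 L" b 0 a, OF less_imp_le[OF b(3)] less_imp_le[OF a(3)] ab cab] by blast
  have P: "Peq r1 r2 r3 L l"
  proof (rule Hf_zero_Peq[OF L r2_gt _ _ l(3)])
    show "- r2 < l" using a l by linarith
    show "l < min (- max r1 r3) (pi ^ 2 / L ^ 2 - r2)" using b l unfolding m_def by linarith
  qed
  have "lambda1 r1 r2 r3 L = (THE l. Peq r1 r2 r3 L l)"
  proof -
    have "\<not> L \<le> Lbar r1 r2 r3" using LL by simp
    then show ?thesis unfolding lambda1_def Peq_def by (simp only: if_False)
  qed
  also have "\<dots> = l"
  proof (rule the_equality)
    show "Peq r1 r2 r3 L l" by (rule P)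
    show "\<And>x. Peq r1 r2 r3 L x \<Longrightarrow> x = l" using Peq_uniq[OF L r2_gt _ P] by blast
  qed
  finally show ?thesis using P by simp
qed



definition goodg where
  "goodg r1 r2 r3 L l g1 g1' g2 g2' \<longleftrightarrow>
    (\<forall>w. (g1 has_real_derivative g1' w) (at w)) \<and>
    (\<forall>w. (g1' has_real_derivative (- (r2 + l) * g1 w)) (at w)) \<and>
    (\<forall>w. (g2 has_real_derivative g2' w) (at w)) \<and>
    (\<forall>w. (g2' has_real_derivative (- (r3 + l) * g2 w)) (at w)) \<and>
    g1 0 = 1 \<and> (\<forall>w. 0 \<le> w \<and> w \<le> L \<longrightarrow> 0 \<le> g1 w) \<and> (\<forall>w. L \<le> w \<longrightarrow> 0 \<le> g2 w) \<and>
    g1 L = g2 L \<and> g1' 0 \<le> sqrt (- l - r1) \<and> g2' L \<le> g1' L \<and>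
    (\<forall>w\<ge>0. phi1 r1 r2 r3 L (w / L) = (if w < L then g1 w else g2 w))"

lemma case2_good:
  assumes pos: "r1 > 0" "r3 > 0" and L: "L > 0" and r2_gt: "r2 > max r1 r3"
    and LL: "\<not> Lbar r1 r2 r3 < L" and r13: "r1 < r3"
  shows "lambda1 r1 r2 r3 L = - r3 \<and>
    (\<exists>g1 g1' g2 g2'. goodg r1 r2 r3 L (lambda1 r1 r2 r3 L) g1 g1' g2 g2')"
proof -
  have l: "lambda1 r1 r2 r3 L = - r3" using LL r13 by (simp add: lambda1_def max_def)
  define k where "k = sqrt (r2 - r3)"
  define \<rho> where "\<rho> = sqrt ((r3 - r1) / (r2 - r3))"
  define C3 where "C3 = C3_of \<rho>"
  have k0: "k > 0" using r2_gt by (simp add: k_def)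
  have kk: "k * k = r2 - r3" using r2_gt by (simp add: k_def)
  have kk2: "k * (k * z) = (r2 - r3) * z" for z by (simp add: mult.assoc[symmetric] kk)
  have \<rho>0: "\<rho> > 0" using r2_gt r13 by (simp add: \<rho>_def)
  note C3 = C3_of_props[OF \<rho>0, folded C3_def]
  have sC: "sin C3 > 0" using C3(2,3) pi_gt_zero by (intro sin_gt_zero) linarith+
  then have sCn: "sin C3 \<noteq> 0" by simp
  have Lb: "Lbar r1 r2 r3 = 1 / k * (pi / 2 - C3)"
  proof -
    have "sqrt ((r2 - r3) / (r3 - r1)) = 1 / \<rho>" using r13 r2_gt by (simp add: \<rho>_def real_sqrt_divide)
    then show ?thesis using r13 unfolding Lbar_def arccot_def C3(1) k_def by (simp add: max_def)
  qed
  have kL: "k * L + C3 \<le> pi / 2" using LL Lb k0 by (simp add: field_simps)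
  define g1 where "g1 = (\<lambda>w. sin (k * w + C3) / sin C3)"
  define g1' where "g1' = (\<lambda>w. k * cos (k * w + C3) / sin C3)"
  define g2 where "g2 = (\<lambda>w. (sin (k * L + C3) + k * cos (k * L + C3) * (w - L)) / sin C3)"
  define g2' where "g2' = (\<lambda>w::real. k * cos (k * L + C3) / sin C3)"
  have "goodg r1 r2 r3 L (- r3) g1 g1' g2 g2'"
    unfolding goodg_def
  proof (intro conjI allI impI)
    fix w
    show "(g1 has_real_derivative g1' w) (at w)" unfolding g1_def g1'_def
      by (rule derivative_eq_intros refl | simp add: sCn)+
    show "(g1' has_real_derivative (- (r2 + - r3) * g1 w)) (at w)" unfolding g1_def g1'_def
      apply (rule derivative_eq_intros refl | simp add: sCn)+
      using sCn by (simp add: field_simps) (simp add: kk2 algebra_simps)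
    show "(g2 has_real_derivative g2' w) (at w)" unfolding g2_def g2'_def
      by (rule derivative_eq_intros refl | simp add: sCn)+
    show "(g2' has_real_derivative (- (r3 + - r3) * g2 w)) (at w)" unfolding g2'_def
      by (rule derivative_eq_intros refl | simp add: sCn)+
  next
    show "g1 0 = 1" using sC by (simp add: g1_def)
  next
    fix w :: real assume w: "0 \<le> w \<and> w \<le> L"
    have "k * w \<le> k * L" using w k0 by simp
    moreover have "0 \<le> k * w" using w k0 by simp
    ultimately have h: "0 \<le> k * w + C3" "k * w + C3 \<le> pi" using kL C3(2,3) pi_gt_zero by linarith+
    show "0 \<le> g1 w" unfolding g1_def using h sC
      by (intro divide_nonneg_pos sin_ge_zero) auto
  next
    fix w :: real assume w: "L \<le> w"
    have kLp: "0 \<le> k * L" using k0 L by simp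
    have h: "0 \<le> k * L + C3" "k * L + C3 \<le> pi" "- (pi / 2) \<le> k * L + C3"
      using kLp kL C3(2) pi_gt_zero by linarith+
    have "0 \<le> sin (k * L + C3)" using h by (intro sin_ge_zero) auto
    moreover have "0 \<le> cos (k * L + C3)" using h kL by (intro cos_ge_zero) auto
    ultimately show "0 \<le> g2 w" unfolding g2_def using w k0 sC
      by (intro divide_nonneg_pos add_nonneg_nonneg mult_nonneg_nonneg) auto
  next
    show "g1 L = g2 L" by (simp add: g1_def g2_def)
  next
    have "g1' 0 = k * cot C3" by (simp add: g1'_def cot_def)
    also have "\<dots> = k * \<rho>" using C3(4) by simp
    also have "\<dots> = sqrt (r3 - r1)" using r2_gt r13
      by (simp add: k_def \<rho>_def real_sqrt_mult[symmetric])
    finally show "g1' 0 \<le> sqrt (- (- r3) - r1)" by simp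
  next
    show "g2' L \<le> g1' L" by (simp add: g1'_def g2'_def)
  next
    fix w :: real assume w: "0 \<le> w"
    show "phi1 r1 r2 r3 L (w / L) = (if w < L then g1 w else g2 w)"
      using LL r13 w L sC
      by (auto simp: phi1_def phi_case2_def Let_def g1_def g2_def k_def \<rho>_def[symmetric]
          C3_def[symmetric] field_simps)
  qed
  then show ?thesis using l by auto
qed


lemma case3_good:
  assumes pos: "r1 > 0" "r3 > 0" and L: "L > 0" and r2_gt: "r2 > max r1 r3"
    and LL: "\<not> Lbar r1 r2 r3 < L" and r13: "\<not> r1 < r3"
  shows "lambda1 r1 r2 r3 L = - r1 \<and>
    (\<exists>g1 g1' g2 g2'. goodg r1 r2 r3 L (lambda1 r1 r2 r3 L) g1 g1' g2 g2')"
proof -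
  have ne: "r1 \<noteq> r3" using LL L by (auto simp: Lbar_def)
  then have r31: "r3 < r1" using r13 by simp
  have l: "lambda1 r1 r2 r3 L = - r1" using LL r31 by (simp add: lambda1_def max_def)
  define k where "k = sqrt (r2 - r1)"
  define q where "q = sqrt (r1 - r3)"
  define \<rho> where "\<rho> = sqrt ((r1 - r3) / (r2 - r1))"
  define C3 where "C3 = C3_of \<rho>"
  have k0: "k > 0" using r2_gt by (simp add: k_def)
  have kk2: "k * (k * z) = (r2 - r1) * z" for z using r2_gt by (simp add: mult.assoc[symmetric] k_def)
  have q0: "q > 0" using r31 by (simp add: q_def)
  have qq: "q * q = r1 - r3" using r31 by (simp add: q_def)
  have qq2: "q * (q * z) = (r1 - r3) * z" for z using r31 by (simp add: mult.assoc[symmetric] q_def)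
  have \<rho>0: "\<rho> > 0" using r2_gt r31 by (simp add: \<rho>_def)
  note C3 = C3_of_props[OF \<rho>0, folded C3_def]
  have sC: "sin C3 > 0" using C3(2,3) pi_gt_zero by (intro sin_gt_zero) linarith+
  have Lb: "Lbar r1 r2 r3 = 1 / k * (pi / 2 - C3)"
  proof -
    have "sqrt ((r2 - r1) / (r1 - r3)) = 1 / \<rho>" using r31 r2_gt by (simp add: \<rho>_def real_sqrt_divide)
    then show ?thesis using r31 unfolding Lbar_def arccot_def C3(1) k_def by (simp add: max_def)
  qed
  have kL: "k * L + C3 \<le> pi / 2" using LL Lb k0 by (simp add: field_simps)
  have kLp: "0 < k * L" using k0 L by simp
  have hS: "0 < k * L + C3" "k * L + C3 < pi" "- (pi / 2) \<le> k * L + C3"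
    using kLp kL C3(2) pi_gt_zero by linarith+
  define S where "S = sin (k * L + C3)"
  have S0: "S > 0" unfolding S_def using hS by (intro sin_gt_zero) auto
  then have Sn: "S \<noteq> 0" by simp
  have cS: "0 \<le> cos (k * L + C3)" using hS kL by (intro cos_ge_zero) auto
  define g1 where "g1 = (\<lambda>w. sin (k * L - k * w + C3) / S)"
  define g1' where "g1' = (\<lambda>w. - k * cos (k * L - k * w + C3) / S)"
  define g2 where "g2 = (\<lambda>w. exp (- q * (w - L)) * sin C3 / S)"
  define g2' where "g2' = (\<lambda>w. - q * exp (- q * (w - L)) * sin C3 / S)"
  have "goodg r1 r2 r3 L (- r1) g1 g1' g2 g2'"
    unfolding goodg_def
  proof (intro conjI allI impI)
    fix w
    show "(g1 has_real_derivative g1' w) (at w)" unfolding g1_def g1'_def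
      by (rule derivative_eq_intros refl | simp add: Sn)+
    show "(g1' has_real_derivative (- (r2 + - r1) * g1 w)) (at w)" unfolding g1_def g1'_def
      apply (rule derivative_eq_intros refl | simp add: Sn)+
      using Sn by (simp add: field_simps) (simp add: kk2 algebra_simps)
    show "(g2 has_real_derivative g2' w) (at w)" unfolding g2_def g2'_def
      by (rule derivative_eq_intros refl | simp add: Sn)+
    show "(g2' has_real_derivative (- (r3 + - r1) * g2 w)) (at w)" unfolding g2_def g2'_def
      apply (rule derivative_eq_intros refl | simp add: Sn)+
      using Sn by (simp add: field_simps) (simp add: qq2 qq algebra_simps)
  next
    show "g1 0 = 1" using Sn by (simp add: g1_def S_def)
  next
    fix w :: real assume w: "0 \<le> w \<and> w \<le> L"
    have "k * w \<le> k * L" using w k0 by simp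
    moreover have "0 \<le> k * w" using w k0 by simp
    ultimately have h: "0 \<le> k * L - k * w + C3" "k * L - k * w + C3 \<le> pi" using kL C3(2,3) pi_gt_zero by linarith+
    show "0 \<le> g1 w" unfolding g1_def using h S0
      by (intro divide_nonneg_pos sin_ge_zero) auto
  next
    fix w :: real assume w: "L \<le> w"
    show "0 \<le> g2 w" unfolding g2_def using sC S0 by simp
  next
    show "g1 L = g2 L" by (simp add: g1_def g2_def)
  next
    have "g1' 0 \<le> 0" unfolding g1'_def using k0 cS S0 by (simp add: divide_nonpos_pos)
    then show "g1' 0 \<le> sqrt (- (- r1) - r1)" by simp
  next
    have "cos C3 = \<rho> * sin C3" using C3(4) sC by (simp add: cot_def field_simps)
    moreover have "k * \<rho> = q" using r2_gt r31 by (simp add: k_def \<rho>_def q_def real_sqrt_mult[symmetric])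
    ultimately have "k * cos C3 = q * sin C3" by (metis mult.assoc)
    then show "g2' L \<le> g1' L" by (simp add: g1'_def g2'_def)
  next
    fix w :: real assume w: "0 \<le> w"
    have ps: "phi_case2 r3 r2 r1 L z = (if z \<le> 0 then exp (L * q * z) else if z < 1 then
       sin (L * k * z + C3) / sin C3 else (sin (L * k + C3) + k * cos (L * k + C3) * L * (z - 1)) / sin C3)" for z
      unfolding phi_case2_def Let_def k_def q_def C3_def \<rho>_def by simp
    have ps1: "phi_case2 r3 r2 r1 L 1 = S / sin C3" unfolding ps S_def by (simp add: mult.commute)
    have ph: "phi1 r1 r2 r3 L (w / L) = phi_case2 r3 r2 r1 L (1 - w / L) / (S / sin C3)"
      using LL r13 ps1 by (simp add: phi1_def)
    consider "w = 0" | "0 < w" "w < L" | "L \<le> w" using w by linarith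
    then show "phi1 r1 r2 r3 L (w / L) = (if w < L then g1 w else g2 w)"
    proof cases
      case 1 then show ?thesis using ph ps1 L S0 sC by (simp add: g1_def S_def)
    next
      case 2
      then have z: "0 < 1 - w / L" "1 - w / L < 1" using L by (auto simp: field_simps)
      have "L * k * (1 - w / L) = k * L - k * w" using L by (simp add: field_simps)
      then show ?thesis using ph z 2 sC S0 unfolding ps by (simp add: g1_def)
    next
      case 3
      then have z: "1 - w / L \<le> 0" using L by (auto simp: field_simps)
      have "L * q * (1 - w / L) = - q * (w - L)" using L by (simp add: field_simps)
      then show ?thesis using ph z 3 sC S0 unfolding ps by (simp add: g2_def)
    qed
  qed
  then show ?thesis using l by auto
qed


lemma case1_good:
  assumes pos: "r1 > 0" "r3 > 0" and L: "L > 0" and r2_gt: "r2 > max r1 r3"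
    and LL: "Lbar r1 r2 r3 < L"
  shows "- r2 < lambda1 r1 r2 r3 L \<and> lambda1 r1 r2 r3 L < - max r1 r3 \<and>
    (\<exists>g1 g1' g2 g2'. goodg r1 r2 r3 L (lambda1 r1 r2 r3 L) g1 g1' g2 g2')"
proof -
  define l where "l = lambda1 r1 r2 r3 L"
  have P: "Peq r1 r2 r3 L l" unfolding l_def by (rule lambda1_case1[OF pos L r2_gt LL])
  have lb: "- r2 < l" "l < min (- max r1 r3) (pi ^ 2 / L ^ 2 - r2)" using P by (auto simp: Peq_def)
  note i = inI[OF L r2_gt lb]
  define k where "k = sqrt (r2 + l)"
  define p where "p = sqrt (- r1 - l)"
  define q where "q = sqrt (- r3 - l)"
  define \<rho> where "\<rho> = sqrt ((- r1 - l) / (r2 + l))"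
  define C3 where "C3 = C3_of \<rho>"
  define \<theta> where "\<theta> = k * L"
  have k0: "k > 0" and p0: "p > 0" and q0: "q > 0" using i by (auto simp: k_def p_def q_def)
  have kk: "k * k = r2 + l" using lb by (simp add: k_def)
  have kk2: "k * (k * z) = (r2 + l) * z" for z by (simp add: mult.assoc[symmetric] kk)
  have qq: "q * q = - r3 - l" using lb by (simp add: q_def max_def split: if_splits)
  have qq2: "q * (q * z) = (- r3 - l) * z" for z by (simp add: mult.assoc[symmetric] qq)
  have \<rho>p: "\<rho> = p / k" by (simp add: \<rho>_def p_def k_def real_sqrt_divide)
  have \<rho>0: "\<rho> > 0" using p0 k0 \<rho>p by simp
  note C3 = C3_of_props[OF \<rho>0, folded C3_def]
  have sC: "sin C3 > 0" using C3(2,3) pi_gt_zero by (intro sin_gt_zero) linarith+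
  then have sCn: "sin C3 \<noteq> 0" by simp
  have th: "0 < \<theta>" "\<theta> < pi" using i by (auto simp: \<theta>_def k_def mult.commute)
  have sth: "sin \<theta> > 0" using th by (intro sin_gt_zero) auto
  have kc: "k * cos C3 = p * sin C3"
  proof -
    have "cos C3 / sin C3 = p / k" using C3(4) \<rho>p by (simp add: cot_def)
    then show ?thesis using sC k0 by (simp add: field_simps)
  qed
  have eq: "cos \<theta> * (k * (p + q)) = sin \<theta> * (k * k - p * q)"
  proof -
    have "cot \<theta> = (k * k - p * q) / (k * (p + q))"
      using P i(4) kk unfolding Peq_def \<theta>_def k_def p_def q_def by (simp add: mult.commute)
    moreover have "k * (p + q) > 0" using k0 p0 q0 by simp
    ultimately show ?thesis using sth by (simp add: cot_def field_simps)
  qed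
  have ident: "k * cos (\<theta> + C3) = - q * sin (\<theta> + C3)"
  proof -
    have "k * (k * cos (\<theta> + C3) + q * sin (\<theta> + C3))
       = sin C3 * (cos \<theta> * (k * (p + q)) - sin \<theta> * (k * k - p * q))
         + (k * cos C3 - p * sin C3) * (k * cos \<theta> + q * sin \<theta>)"
      by (simp add: cos_add sin_add algebra_simps)
    also have "\<dots> = 0" using eq kc by simp
    finally have "k * cos (\<theta> + C3) + q * sin (\<theta> + C3) = 0" using k0 by simp
    then show ?thesis by linarith
  qed
  have tC: "\<theta> + C3 < pi"
  proof (rule ccontr)
    assume "\<not> \<theta> + C3 < pi"
    then have a: "pi \<le> \<theta> + C3" "\<theta> + C3 < 3 * pi / 2" using th C3 by auto
    have "cos (\<theta> + C3) < 0" using a pi_gt_zero by (intro cos_neg_mid) auto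
    moreover have "sin (\<theta> + C3) \<le> 0" using a by (intro sin_le_zero) auto
    ultimately have "k * cos (\<theta> + C3) < 0" "0 \<le> - q * sin (\<theta> + C3)"
      using k0 q0 by (auto intro: mult_pos_neg mult_nonneg_nonpos)
    then show False using ident by linarith
  qed
  have sS: "sin (\<theta> + C3) > 0" using th C3(2) tC by (intro sin_gt_zero) linarith+
  define g1 where "g1 = (\<lambda>w. sin (k * w + C3) / sin C3)"
  define g1' where "g1' = (\<lambda>w. k * cos (k * w + C3) / sin C3)"
  define g2 where "g2 = (\<lambda>w. sin (k * L + C3) / sin C3 * exp (- q * (w - L)))"
  define g2' where "g2' = (\<lambda>w. - q * (sin (k * L + C3) / sin C3 * exp (- q * (w - L))))"
  have "goodg r1 r2 r3 L l g1 g1' g2 g2'"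
    unfolding goodg_def
  proof (intro conjI allI impI)
    fix w
    show "(g1 has_real_derivative g1' w) (at w)" unfolding g1_def g1'_def
      by (rule derivative_eq_intros refl | simp add: sCn)+
    show "(g1' has_real_derivative (- (r2 + l) * g1 w)) (at w)" unfolding g1_def g1'_def
      apply (rule derivative_eq_intros refl | simp add: sCn)+
      using sCn by (simp add: field_simps) (simp add: kk2 algebra_simps)
    show "(g2 has_real_derivative g2' w) (at w)" unfolding g2_def g2'_def
      by (rule derivative_eq_intros refl | simp add: sCn)+
    show "(g2' has_real_derivative (- (r3 + l) * g2 w)) (at w)" unfolding g2_def g2'_def
      apply (rule derivative_eq_intros refl | simp add: sCn)+
      using sCn by (simp add: field_simps) (simp add: qq2 qq algebra_simps)
  next
    show "g1 0 = 1" using sCn by (simp add: g1_def)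
  next
    fix w :: real assume w: "0 \<le> w \<and> w \<le> L"
    have "k * w \<le> k * L" using w k0 by simp
    moreover have "0 \<le> k * w" using w k0 by simp
    ultimately have h: "0 < k * w + C3" "k * w + C3 < pi" using tC C3(2) unfolding \<theta>_def by linarith+
    show "0 \<le> g1 w" unfolding g1_def using h sC
      by (intro divide_nonneg_pos sin_ge_zero) auto
  next
    fix w :: real assume w: "L \<le> w"
    show "0 \<le> g2 w" unfolding g2_def using sC sS by (simp add: \<theta>_def)
  next
    show "g1 L = g2 L" by (simp add: g1_def g2_def)
  next
    have "g1' 0 = k * cot C3" by (simp add: g1'_def cot_def)
    also have "\<dots> = p" using C3(4) \<rho>p k0 by simp
    finally show "g1' 0 \<le> sqrt (- l - r1)" by (simp add: p_def)
  next
    have "g2' L = - q * sin (\<theta> + C3) / sin C3" by (simp add: g2'_def \<theta>_def)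
    also have "\<dots> = k * cos (\<theta> + C3) / sin C3" using ident by simp
    also have "\<dots> = g1' L" by (simp add: g1'_def \<theta>_def)
    finally show "g2' L \<le> g1' L" by simp
  next
    fix w :: real assume w: "0 \<le> w"
    have ph: "phi1 r1 r2 r3 L y = (if y \<le> 0 then exp (L * p * y) else if y < 1 then
       sin (L * k * y + C3) / sin C3 else sin (L * k + C3) / sin C3 * exp (- L * q * (y - 1)))" for y
      using LL unfolding phi1_def phi_case1_def Let_def k_def p_def q_def C3_def \<rho>_def l_def by simp
    consider "w = 0" | "0 < w" "w < L" | "L \<le> w" using w by linarith
    then show "phi1 r1 r2 r3 L (w / L) = (if w < L then g1 w else g2 w)"
    proof cases
      case 1 then show ?thesis using ph L sCn by (simp add: g1_def)
    next
      case 2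
      then have z: "0 < w / L" "w / L < 1" using L by (auto simp: field_simps)
      have "phi1 r1 r2 r3 L (w / L) = sin (L * k * (w / L) + C3) / sin C3"
        using ph[of "w / L"] z by (simp only: if_False if_True not_le[symmetric] not_False_eq_True)
      moreover have "L * k * (w / L) = k * w" using L by (simp add: field_simps)
      ultimately show ?thesis using 2 by (simp add: g1_def)
    next
      case 3
      then have z: "\<not> w / L \<le> 0" "\<not> w / L < 1" using L by (auto simp: field_simps)
      have "- L * q * (w / L - 1) = - q * (w - L)" using L by (simp add: field_simps)
      then show ?thesis using ph z 3 by (simp add: g2_def mult.commute)
    qed
  qed
  then show ?thesis using lb l_def by auto
qed



lemma params:
  fixes r1 l cA c lc :: real
  assumes r1: "r1 > 0" and l: "l \<le> - r1" and cA: "cA > 2 * sqrt (- l)"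
    and c: "c = (if cA < 2 * sqrt r1 + 2 * sqrt (- l - r1)
                 then (cA - 2 * sqrt (- l - r1)) / 2 + 2 * r1 / (cA - 2 * sqrt (- l - r1))
                 else 2 * sqrt r1)"
    and lc: "lc = (c - sqrt (c ^ 2 - 4 * r1)) / 2"
  shows "lc > 0" "lc ^ 2 + r1 \<le> lc * c" "c \<le> cA" "lc * (cA - c) \<le> cA ^ 2 / 4 + l"
    "sqrt (- l - r1) \<le> cA / 2 - lc"
proof -
  define s0 where "s0 = sqrt (- l - r1)"
  define a where "a = cA - 2 * s0"
  define t where "t = sqrt r1"
  have s0: "s0 \<ge> 0" "s0 ^ 2 = - l - r1" using l by (auto simp: s0_def)
  have t: "t > 0" "t ^ 2 = r1" using r1 by (auto simp: t_def)
  have lt: "sqrt (- l - r1) < sqrt (- l)" using r1 by simp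
  have a0: "a > 0" using lt cA unfolding a_def s0_def by linarith
  have cA0: "cA > 0" using a0 s0 by (simp add: a_def)
  have cA2: "cA ^ 2 > 4 * (- l)"
  proof -
    have "0 \<le> 2 * sqrt (- l)" using l r1 by simp
    then have "(2 * sqrt (- l)) ^ 2 < cA ^ 2" using cA by (intro power_strict_mono) auto
    moreover have "(2 * sqrt (- l)) ^ 2 = 4 * (- l)" using l r1 by (simp add: power_mult_distrib)
    ultimately show ?thesis by simp
  qed
  have cAa: "cA = a + 2 * s0" by (simp add: a_def)
  show "lc > 0" "lc ^ 2 + r1 \<le> lc * c" "c \<le> cA" "lc * (cA - c) \<le> cA ^ 2 / 4 + l"
    "sqrt (- l - r1) \<le> cA / 2 - lc"
  proof -
    consider "a < 2 * t" | "2 * t \<le> a" using a0 by linarith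
    then have "lc > 0 \<and> lc ^ 2 + r1 \<le> lc * c \<and> c \<le> cA \<and> lc * (cA - c) \<le> cA ^ 2 / 4 + l \<and> s0 \<le> cA / 2 - lc"
    proof cases
      case 1
      have cc: "c = a / 2 + 2 * r1 / a" using 1 c unfolding a_def s0_def t_def by auto
      have aa: "a * a < 4 * r1"
      proof -
        have "a * a < (2 * t) * (2 * t)" using 1 a0 by (intro mult_strict_mono) auto
        then show ?thesis using t by (simp add: power2_eq_square)
      qed
      have ineq: "a / 2 \<le> 2 * r1 / a" using aa a0 by (simp add: field_simps)
      have sq: "c ^ 2 - 4 * r1 = (2 * r1 / a - a / 2) ^ 2"
        unfolding cc using a0 by (simp add: power2_eq_square field_simps)
      have "sqrt (c ^ 2 - 4 * r1) = 2 * r1 / a - a / 2" unfolding sq using ineq by simp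
      then have lca: "lc = a / 2" unfolding lc cc by simp
      have e1: "lc * c = a * a / 4 + r1" unfolding lca cc using a0 by (simp add: field_simps)
      have e2: "lc * (cA - c) = a * a / 4 + a * s0 - r1" unfolding lca cc cAa using a0 by (simp add: field_simps)
      have e3: "cA ^ 2 / 4 + l = a * a / 4 + a * s0 - r1"
        unfolding cAa using s0 by (simp add: power2_eq_square field_simps)
      have ccA: "c \<le> cA"
      proof -
        have "(a + 2 * s0) ^ 2 > 4 * (- l)" using cA2 cAa by simp
        then have "a * a + 4 * s0 * a - 4 * r1 > 0" using s0 by (simp add: power2_eq_square algebra_simps)
        then have "2 * r1 / a \<le> a / 2 + 2 * s0" using a0 by (simp add: field_simps)
        then show ?thesis unfolding cc cAa by simp
      qed
      have "lc ^ 2 = a * a / 4" unfolding lca by (simp add: power2_eq_square)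
      then have f1: "lc ^ 2 + r1 \<le> lc * c" using e1 by linarith
      have f2: "lc * (cA - c) \<le> cA ^ 2 / 4 + l" using e2 e3 by linarith
      have f3: "s0 \<le> cA / 2 - lc" using cAa lca by linarith
      show ?thesis using f1 f2 f3 ccA a0 lca by (intro conjI) linarith+
    next
      case 2
      have cc: "c = 2 * t" using 2 c unfolding a_def s0_def t_def by auto
      have lct: "lc = t" unfolding lc cc using t by (simp add: power_mult_distrib)
      have ccA: "c \<le> cA" using 2 s0 cc cAa by simp
      have "0 \<le> (a / 2 - t) ^ 2 + s0 * (a - 2 * t)" using 2 s0 by simp
      moreover have "(a / 2 - t) ^ 2 + s0 * (a - 2 * t) = a * a / 4 - a * t + t ^ 2 + a * s0 - 2 * s0 * t"
        by (simp add: power2_eq_square algebra_simps)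
      ultimately have G: "0 \<le> a * a / 4 - a * t + r1 + a * s0 - 2 * s0 * t" using t by simp
      have E: "t * (cA - 2 * t) = a * t + 2 * s0 * t - 2 * r1"
        unfolding cAa using t by (simp add: power2_eq_square algebra_simps)
      have F: "cA ^ 2 / 4 + l = a * a / 4 + a * s0 - r1"
        unfolding cAa using s0 by (simp add: power2_eq_square field_simps)
      have "t * (cA - 2 * t) \<le> cA ^ 2 / 4 + l" using E F G by linarith
      moreover have "s0 \<le> cA / 2 - lc" using lct 2 cAa by linarith
      moreover have "lc ^ 2 + r1 \<le> lc * c" using lct cc t by (simp add: power2_eq_square)
      ultimately show ?thesis using lct cc t ccA by simp
    qed
    then show "lc > 0" "lc ^ 2 + r1 \<le> lc * c" "c \<le> cA" "lc * (cA - c) \<le> cA ^ 2 / 4 + l"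
      "sqrt (- l - r1) \<le> cA / 2 - lc" by (auto simp: s0_def)
  qed
qed


theorem lemma3p6:
  fixes r1 r2 r3 L M cA B tau T :: real
    and A :: "real \<Rightarrow> real"
    and r :: "real \<Rightarrow> real \<Rightarrow> real"
    and f :: "real \<Rightarrow> real \<Rightarrow> real \<Rightarrow> real"
  assumes pos: "r1 > 0" "r2 > 0" "r3 > 0" "L > 0" "M > 0"
    and r2_gt: "r2 > max r1 r3"
    and cA_gt: "cA > 2 * sqrt (- lambda1 r1 r2 r3 L)"
    and B_nonneg: "B \<ge> 0" and tau_nonneg: "tau \<ge> 0" and T_pos: "T > 0"
    and A_cont: "continuous_on UNIV A" and A_nonneg: "\<forall>t. A t \<ge> 0"
    and A_lin: "\<forall>t\<in>{tau..<tau + T}. A t = cA * (t - tau) + B"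
    and r_def: "\<forall>t x. r t x = (if x < A t then r1 else if x < A t + L then r2 else r3)"
    and f_bdd: "\<forall>K. \<exists>Bd. \<forall>t x u. \<bar>u\<bar> \<le> K \<longrightarrow> \<bar>f t x u\<bar> \<le> Bd"
    and f_C2: "\<forall>t x. \<exists>f1 f2. (\<forall>u. (f t x has_real_derivative f1 u) (at u) \<and>
                                   (f1 has_real_derivative f2 u) (at u)) \<and>
                             continuous_on UNIV f2"
    and f_zero: "\<forall>t x. f t x 0 = 0"
    and f_deriv0: "\<forall>t x. (f t x has_real_derivative r t x) (at 0)"
    and f_kpp: "\<forall>t x u. u \<ge> 0 \<longrightarrow> r t x * u \<ge> f t x u \<and> f t x u \<ge> r t x * u - M * u ^ 2"
    and f_neg: "\<forall>t x u. u > 1 \<longrightarrow> f t x u < 0"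
  shows "\<forall>C\<ge>1. gen_supersolution f tau T
           (\<lambda>t x. C * ubar r1 r2 r3 L cA (t - tau) (x - B))"
  proof (intro allI impI)
  fix C :: real assume C: "C \<ge> 1"
  define l where "l = lambda1 r1 r2 r3 L"
  have cases3: "l \<le> - max r1 r3 \<and> (\<exists>g1 g1' g2 g2'. goodg r1 r2 r3 L l g1 g1' g2 g2')"
  proof (cases "Lbar r1 r2 r3 < L")
    case True
    then show ?thesis using case1_good[OF pos(1) pos(3) pos(4) r2_gt True] unfolding l_def by auto
  next
    case False
    show ?thesis
    proof (cases "r1 < r3")
      case True
      then show ?thesis using case2_good[OF pos(1) pos(3) pos(4) r2_gt False True] unfolding l_def
        by (auto simp: max_def; blast)
    next
      case F2: False
      then show ?thesis using case3_good[OF pos(1) pos(3) pos(4) r2_gt False F2] unfolding l_def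
        by (auto simp: max_def; blast)
    qed
  qed
  then obtain g1 g1' g2 g2' where G: "goodg r1 r2 r3 L l g1 g1' g2 g2'" by blast
  have lr: "l \<le> - r1" using cases3 by (auto simp: max_def split: if_splits)
  define c where "c = speed_c r1 r2 r3 L cA"
  define lc where "lc = lam r1 c"
  have cdef: "c = (if cA < 2 * sqrt r1 + 2 * sqrt (- l - r1)
                 then (cA - 2 * sqrt (- l - r1)) / 2 + 2 * r1 / (cA - 2 * sqrt (- l - r1))
                 else 2 * sqrt r1)"
    unfolding c_def speed_c_def Ffun_def l_def by simp
  have lcdef: "lc = (c - sqrt (c ^ 2 - 4 * r1)) / 2" by (simp add: lc_def lam_def)
  have cA': "cA > 2 * sqrt (- l)" using cA_gt by (simp add: l_def)
  note P = params[OF pos(1) lr cA' cdef lcdef]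
  have phieq: "\<forall>w\<ge>0. phi1 r1 r2 r3 L (w / L) = (if w < L then g1 w else g2 w)"
    using G by (simp add: goodg_def)
  have ueq: "ubar r1 r2 r3 L cA = Vf c cA lc g1 g2 L"
  proof (intro ext)
    fix t x
    show "ubar r1 r2 r3 L cA t x = Vf c cA lc g1 g2 L t x"
    proof (cases "x < cA * t")
      case True
      then show ?thesis unfolding ubar_def Vf_def Let_def c_def[symmetric] lc_def[symmetric] by simp
    next
      case False
      then have "x - cA * t \<ge> 0" by simp
      then have "phi1 r1 r2 r3 L ((x - cA * t) / L) = (if x - cA * t < L then g1 (x - cA * t) else g2 (x - cA * t))"
        using phieq by blast
      then show ?thesis using False
        unfolding ubar_def Vf_def Let_def c_def[symmetric] lc_def[symmetric] by simp
    qed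
  qed
  have f_kpp': "\<forall>t x u. u \<ge> 0 \<longrightarrow> f t x u \<le> r t x * u" using f_kpp by blast
  have Gf: "\<forall>w. (g1 has_real_derivative g1' w) (at w)"
    "\<forall>w. (g1' has_real_derivative (- (r2 + l) * g1 w)) (at w)"
    "\<forall>w. (g2 has_real_derivative g2' w) (at w)"
    "\<forall>w. (g2' has_real_derivative (- (r3 + l) * g2 w)) (at w)"
    "g1 0 = 1" "\<forall>w. 0 \<le> w \<and> w \<le> L \<longrightarrow> 0 \<le> g1 w" "\<forall>w. L \<le> w \<longrightarrow> 0 \<le> g2 w"
    "g1 L = g2 L" "g2' L \<le> g1' L"
    using G by (simp_all add: goodg_def)
  have g1'0: "g1' 0 \<le> cA / 2 - lc" using G P(5) by (simp add: goodg_def)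
  show "gen_supersolution f tau T (\<lambda>t x. C * ubar r1 r2 r3 L cA (t - tau) (x - B))"
    unfolding ueq
    by (rule mainM[OF P(1) P(2) P(3) P(4) pos(4) C T_pos Gf(1) Gf(2) Gf(3) Gf(4) Gf(5) Gf(6) Gf(7) Gf(8)
        g1'0 Gf(9) A_lin r_def f_kpp' f_neg])
qed

end
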